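(* Let $q=p^e>2$ with $p$ prime, let $r\ge2$, $m=2r$, $D=\{x\in\mathbb{F}_{q^m}:\mathrm{Tr}_{q^r/q}(x^{q^r+1})=0\}=\{d_1,\dots,d_n\}$ with $n=q^{r-1}(q^r-q+1)$, and let $\alpha$ be a generator of $\mathbb{F}_{q^m}^*$. Let $G_1$ be the $(m+1)\times n$ matrix whose first row is $(1,\dots,1)$, whose second row is $(\mathrm{Tr}_{q^m/q}(d_1),\dots,\mathrm{Tr}_{q^m/q}(d_n))$, whose third row is $(\mathrm{Tr}_{q^m/q}(\alpha d_1)+1,\dots,\mathrm{Tr}_{q^m/q}(\alpha d_n)+1)$, and whose $(i+2)$-th row, for $2\le i\le m-1$, is $(\mathrm{Tr}_{q^m/q}(\alpha^i d_1),\dots,\mathrm{Tr}_{q^m/q}(\alpha^i d_n))$. Let $G_1'=[I_{m+1}:G_1]$ and let $\overline{\mathcal{C}_D}'$ be the linear code over $\mathbb{F}_q$ generated by $G_1'$. Then $\overline{\mathcal{C}_D}'$ has parameters $[n+m+1,\ m+1,\ d']$ with $d'\ge q^{r-1}(q^r-q^{r-1}-q+1)+1$, and $\overline{\mathcal{C}_D}'^{\perp}$ has parameters $[n+m+1,\ n,\ d'^{\perp}]$ with $2\le d'^{\perp}\le 3$.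
   Context: $\mathrm{Tr}_{q^k/q}$ is the trace map from $\mathbb{F}_{q^k}$ to $\mathbb{F}_q$; $I_{m+1}$ is the identity matrix of size $m+1$. The matrix $G_1$ is a generator matrix of $\{(\mathrm{Tr}_{q^m/q}(bx)+c)_{x\in D}:b\in\mathbb{F}_{q^m},c\in\mathbb{F}_q\}$. *)

theory Defs
  imports Main "HOL-Computational_Algebra.Primes"
begin

text \<open>The large field F_{q^m} is a finite field type 'a; the subfield F_q is the
  set of elements fixed by x \<mapsto> x^q.\<close>

definition subfield_q :: "nat \<Rightarrow> 'a::field set" where
  "subfield_q q = {x. x ^ q = x}"

definition trace :: "nat \<Rightarrow> nat \<Rightarrow> 'a::field \<Rightarrow> 'a" where
  "trace q k x = (\<Sum>i<k. x ^ (q ^ i))"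

text \<open>Words of length N: functions nat => 'a, zero outside {..<N}.\<close>
definition hamming_weight :: "nat \<Rightarrow> (nat \<Rightarrow> 'a::zero) \<Rightarrow> nat" where
  "hamming_weight N v = card {l. l < N \<and> v l \<noteq> 0}"

definition min_distance :: "nat \<Rightarrow> (nat \<Rightarrow> 'a::zero) set \<Rightarrow> nat" where
  "min_distance N C = Min {hamming_weight N v | v. v \<in> C \<and> v \<noteq> (\<lambda>_. 0)}"

definition gen_code :: "nat \<Rightarrow> nat \<Rightarrow> nat \<Rightarrow> (nat \<Rightarrow> nat \<Rightarrow> 'a::field) \<Rightarrow> (nat \<Rightarrow> 'a) set" where
  "gen_code q k N G = {(\<lambda>l. if l < N then (\<Sum>j<k. c j * G j l) else 0) | c.
                         \<forall>j<k. c j \<in> subfield_q q}"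

definition dual_code :: "nat \<Rightarrow> nat \<Rightarrow> (nat \<Rightarrow> 'a::field) set \<Rightarrow> (nat \<Rightarrow> 'a) set" where
  "dual_code q N C = {v. (\<forall>l. N \<le> l \<longrightarrow> v l = 0) \<and> (\<forall>l<N. v l \<in> subfield_q q)
                        \<and> (\<forall>c\<in>C. (\<Sum>l<N. v l * c l) = 0)}"

text \<open>An F_q-linear code has dimension k iff it has q^k elements.\<close>
definition has_dim :: "nat \<Rightarrow> (nat \<Rightarrow> 'a) set \<Rightarrow> nat \<Rightarrow> bool" where
  "has_dim q C k \<longleftrightarrow> finite C \<and> card C = q ^ k"

text \<open>The matrix G1 (rows 0..m, 0-indexed; columns 0..n-1, d enumerates D).\<close>
definition G1 :: "nat \<Rightarrow> nat \<Rightarrow> 'a::field \<Rightarrow> (nat \<Rightarrow> 'a) \<Rightarrow> nat \<Rightarrow> nat \<Rightarrow> 'a" where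
  "G1 q m \<alpha> d j l =
     (if j = 0 then 1
      else trace q m (\<alpha> ^ (j - 1) * d l) + (if j = 2 then 1 else 0))"

definition G1' :: "nat \<Rightarrow> nat \<Rightarrow> 'a::field \<Rightarrow> (nat \<Rightarrow> 'a) \<Rightarrow> nat \<Rightarrow> nat \<Rightarrow> 'a" where
  "G1' q m \<alpha> d j l =
     (if l < m + 1 then (if l = j then 1 else 0) else G1 q m \<alpha> d j (l - (m + 1)))"

end

theory Submission
  imports Defs "HOL-Number_Theory.Residues" "HOL-Library.FuncSet" "HOL-Computational_Algebra.Polynomial"
begin

locale ffield =
  fixes p e q r m :: nat and \<alpha> :: "'a::{finite,field}"
  assumes p_prime: "prime p" and q_def: "q = p ^ e" and q_gt: "q > 2"
    and r_ge: "r \<ge> 2" and m_def: "m = 2 * r"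
    and card_univ: "card (UNIV :: 'a set) = q ^ m"
    and gen: "\<forall>x::'a. x \<noteq> 0 \<longrightarrow> (\<exists>k. x = \<alpha> ^ k)"
begin

lemma e_pos: "e > 0"
  using q_gt q_def by (cases e) auto

lemma char_eq: "CHAR('a) = p"
proof -
  have pos: "CHAR('a) > 0" by (rule finite_imp_CHAR_pos) simp
  have pr: "prime CHAR('a)" using prime_CHAR_semidom[OF pos] .
  have "CHAR('a) dvd p ^ (e * m)" using CHAR_dvd_CARD[where 'a='a] card_univ q_def
    by (simp add: power_mult)
  hence "CHAR('a) dvd p" using pr prime_dvd_power by blast
  thus ?thesis using pr p_prime primes_dvd_imp_eq by blast
qed

lemma frob_add: "(x + y :: 'a) ^ (q ^ i) = x ^ (q ^ i) + y ^ (q ^ i)"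
  by (rule freshmans_dream') (auto simp: char_eq p_prime q_def power_mult[symmetric])

lemma frob_sum: "(sum f A :: 'a) ^ (q ^ i) = (\<Sum>x\<in>A. f x ^ (q ^ i))"
  by (rule freshmans_dream_sum') (auto simp: char_eq p_prime q_def power_mult[symmetric])

lemma frob_neg: "(- x :: 'a) ^ (q ^ i) = - (x ^ (q ^ i))"
proof -
  have "0 = (x + - x) ^ (q ^ i)" using q_gt by simp
  also have "\<dots> = x ^ (q ^ i) + (- x) ^ (q ^ i)" by (rule frob_add)
  finally show ?thesis by (simp add: eq_neg_iff_add_eq_0 add.commute)
qed

lemma frob_diff: "(x - y :: 'a) ^ (q ^ i) = x ^ (q ^ i) - y ^ (q ^ i)"
  using frob_add[of x "-y" i] frob_neg[of y i] by simp

lemma pow_card: "(x::'a) ^ (q ^ m) = x"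
proof (cases "x = 0")
  case False
  have "x * (\<Prod>y\<in>UNIV-{0}. x * y) = x * x ^ (card (UNIV :: 'a set) - 1) * \<Prod>(UNIV-{0})"
    by (simp add: prod.distrib mult_ac)
  also have "x * x ^ (card (UNIV :: 'a set) - 1) = x ^ Suc (card (UNIV :: 'a set) - 1)"
    by (subst power_Suc) auto
  also have "Suc (card (UNIV :: 'a set) - 1) = card (UNIV :: 'a set)"
    using finite_UNIV_card_ge_0[where ?'a = 'a] by simp
  also have "(\<Prod>y\<in>UNIV-{0}. x * y) = (\<Prod>y\<in>UNIV-{0}. y)"
    by (rule prod.reindex_bij_witness[of _ "\<lambda>y. y / x" "\<lambda>y. x * y"]) (use False in auto)
  finally show ?thesis
    using card_univ by simp
qed (use q_gt m_def r_ge in auto)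


definition M :: nat where "M = q ^ m - 1"

lemma q_gt1: "q > 1" using q_gt by simp

lemma card_ge3: "card (UNIV :: 'a set) \<ge> 3"
proof -
  have "q ^ m \<ge> q ^ 1" using m_def r_ge q_gt by (intro power_increasing) auto
  thus ?thesis using card_univ q_gt by simp
qed

lemma alpha_nz: "\<alpha> \<noteq> 0"
proof
  assume a: "\<alpha> = 0"
  have "UNIV \<subseteq> {0, 1::'a}"
  proof
    fix x :: 'a
    show "x \<in> {0,1}"
    proof (cases "x = 0")
      case False
      then obtain k where "x = \<alpha> ^ k" using gen by blast
      thus ?thesis using a by (cases k) auto
    qed simp
  qed
  hence "card (UNIV :: 'a set) \<le> card {0, 1::'a}" by (intro card_mono) auto
  also have "\<dots> \<le> 2" by (simp add: card_insert_if)
  finally show False using card_ge3 by simp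
qed

lemma M_pos: "M > 0"
  using card_ge3 card_univ M_def by simp

lemma alpha_M: "\<alpha> ^ M = 1"
proof -
  have qm: "q ^ m = Suc M" using M_pos M_def by simp
  have "\<alpha> * \<alpha> ^ M = \<alpha> ^ (q ^ m)" unfolding qm by simp
  also have "\<dots> = \<alpha> * 1" using pow_card by simp
  finally show ?thesis using alpha_nz by simp
qed

lemma alpha_pow_mod: "\<alpha> ^ k = \<alpha> ^ (k mod M)"
proof -
  have "\<alpha> ^ k = \<alpha> ^ (M * (k div M) + k mod M)" by simp
  also have "\<dots> = \<alpha> ^ (k mod M)" by (simp only: power_add power_mult alpha_M) simp
  finally show ?thesis .
qed

lemma nonzero_image: "UNIV - {0} = (\<lambda>k. \<alpha> ^ k) ` {..<M}"
proof
  show "UNIV - {0} \<subseteq> (\<lambda>k. \<alpha> ^ k) ` {..<M}"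
  proof
    fix x :: 'a assume "x \<in> UNIV - {0}"
    then obtain k where "x = \<alpha> ^ k" using gen by blast
    hence "x = \<alpha> ^ (k mod M)" using alpha_pow_mod by simp
    thus "x \<in> (\<lambda>k. \<alpha> ^ k) ` {..<M}" using M_pos by auto
  qed
qed (use alpha_nz in auto)

lemma alpha_inj: "inj_on (\<lambda>k. \<alpha> ^ k) {..<M}"
proof (rule eq_card_imp_inj_on)
  have "card (UNIV - {0::'a}) = M" using card_univ M_def by (simp add: card_Diff_singleton)
  thus "card ((\<lambda>k. \<alpha> ^ k) ` {..<M}) = card {..<M}" using nonzero_image by simp
qed simp

lemma subfield_card_ge:
  assumes dv: "(q ^ k - 1) dvd M" and k: "k > 0"
  shows "card {x::'a. x ^ (q ^ k) = x} \<ge> q ^ k"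
proof -
  define Q where "Q = q ^ k"
  have Q1: "Q > 1" using one_less_power[OF q_gt1 k] Q_def by simp
  define M' where "M' = M div (Q - 1)"
  have MM: "M = M' * (Q - 1)" using dv unfolding Q_def M'_def by (metis dvd_div_mult_self)
  define A where "A = insert 0 ((\<lambda>i. \<alpha> ^ (M' * i)) ` {..<Q - 1})"
  have "A \<subseteq> {x. x ^ Q = x}"
  proof
    fix x assume "x \<in> A"
    then consider "x = 0" | i where "x = \<alpha> ^ (M' * i)" unfolding A_def by auto
    thus "x \<in> {x. x ^ Q = x}"
    proof cases
      case 1 thus ?thesis using Q1 by simp
    next
      case (2 i)
      have "M' * i * Q = M' * i * ((Q - 1) + 1)" using Q1 by simp
      also have "\<dots> = M * i + M' * i" using MM by (simp add: algebra_simps)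
      finally have e1: "M' * i * Q = M * i + M' * i" .
      have "x ^ Q = \<alpha> ^ (M' * i * Q)" using 2 by (simp add: power_mult)
      also have "\<dots> = (\<alpha> ^ M) ^ i * \<alpha> ^ (M' * i)" unfolding e1 by (simp only: power_add power_mult)
      also have "\<dots> = \<alpha> ^ (M' * i)" by (simp add: alpha_M)
      finally show ?thesis using 2 by simp
    qed
  qed
  moreover have "card A = Q"
  proof -
    have M'pos: "M' > 0" using MM M_pos by (cases M') auto
    have inj: "inj_on (\<lambda>i. \<alpha> ^ (M' * i)) {..<Q - 1}"
    proof (rule inj_onI)
      fix i j assume i: "i \<in> {..<Q - 1}" and j: "j \<in> {..<Q - 1}" and eq: "\<alpha> ^ (M' * i) = \<alpha> ^ (M' * j)"
      have "M' * i < M" "M' * j < M" using i j MM M'pos by auto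
      hence "M' * i = M' * j" using alpha_inj eq by (auto dest: inj_onD)
      thus "i = j" using M'pos by simp
    qed
    have "0 \<notin> (\<lambda>i. \<alpha> ^ (M' * i)) ` {..<Q - 1}" using alpha_nz by auto
    thus ?thesis unfolding A_def using inj Q1 by (simp add: card_image)
  qed
  ultimately show ?thesis unfolding Q_def[symmetric]
    by (metis card_mono finite)
qed

lemma subfield_card_le:
  assumes k: "k > 0"
  shows "card {x::'a. x ^ (q ^ k) = x} \<le> q ^ k"
proof -
  define P :: "'a poly" where "P = monom 1 (q ^ k) - [:0, 1:]"
  have Q1: "q ^ k > 1" using one_less_power[OF q_gt1 k] by simp
  define j where "j = q ^ k - 2"
  have j: "q ^ k = Suc (Suc j)" unfolding j_def using Q1 by arith
  have "coeff P (q ^ k) = 1" by (simp add: P_def coeff_pCons j)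
  hence P0: "P \<noteq> 0" by auto
  have "degree P \<le> q ^ k" unfolding P_def
    by (rule degree_diff_le) (use Q1 in \<open>auto simp: degree_monom_le\<close>)
  moreover have "{x. poly P x = 0} = {x::'a. x ^ (q ^ k) = x}"
    by (auto simp: P_def poly_monom)
  ultimately show ?thesis using card_poly_roots_bound[OF P0] by simp
qed

lemma M_dvd1: "(q ^ 1 - 1) dvd M"
proof -
  have "int (q - 1) dvd int (q ^ m - 1)"
  proof -
    have "int (q ^ m - 1) = int q ^ m - 1" using q_gt1 by (simp add: of_nat_diff)
    also have "\<dots> = (int q - 1) * (\<Sum>i<m. int q ^ i)" by (rule power_diff_1_eq)
    finally show ?thesis using q_gt1 by (simp add: of_nat_diff)
  qed
  thus ?thesis unfolding M_def by (simp only: int_dvd_int_iff power_one_right)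
qed

lemma M_dvdr: "(q ^ r - 1) dvd M"
proof -
  have qm: "q ^ m = q ^ r * q ^ r" using m_def by (simp add: mult_2 power_add)
  have eq: "\<And>Q::nat. Q * Q - 1 = (Q - 1) * (Q + 1)"
    by (case_tac Q) (auto simp: algebra_simps)
  show ?thesis unfolding M_def qm by (simp only: eq) (rule dvd_triv_left)
qed

lemma card_F: "card {x::'a. x ^ q = x} = q"
  using subfield_card_ge[OF M_dvd1] subfield_card_le[of 1] by simp

lemma card_K: "card {x::'a. x ^ (q ^ r) = x} = q ^ r"
  using subfield_card_ge[OF M_dvdr] subfield_card_le[of r] r_ge by simp

end


lemma sum_lessThan_add_split:
  "(\<Sum>i<a + b. f i) = (\<Sum>i<a. f i) + (\<Sum>i<(b::nat). f (a + i))"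
  by (induction b) (simp_all add: ac_simps)

context ffield
begin

lemma pow_iter: "(x::'a) ^ q = x \<Longrightarrow> x ^ (q ^ i) = x"
proof (induction i)
  case (Suc i)
  have "x ^ (q ^ Suc i) = (x ^ q) ^ (q ^ i)" by (simp add: power_mult mult.commute)
  thus ?case using Suc by simp
qed simp

lemma sub_add: "(x::'a) ^ (q ^ i) = x \<Longrightarrow> y ^ (q ^ i) = y \<Longrightarrow> (x + y) ^ (q ^ i) = x + y"
  by (simp add: frob_add)
lemma sub_neg: "(x::'a) ^ (q ^ i) = x \<Longrightarrow> (- x) ^ (q ^ i) = - x"
  by (simp add: frob_neg)
lemma sub_diff: "(x::'a) ^ (q ^ i) = x \<Longrightarrow> y ^ (q ^ i) = y \<Longrightarrow> (x - y) ^ (q ^ i) = x - y"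
  by (simp add: frob_diff)
lemma sub_mult: "(x::'a) ^ n = x \<Longrightarrow> y ^ n = y \<Longrightarrow> (x * y) ^ n = x * y"
  by (simp add: power_mult_distrib)
lemma sub_inv: "(x::'a) ^ n = x \<Longrightarrow> (inverse x) ^ n = inverse x"
  by (simp add: power_inverse)
lemma sub_divide: "(x::'a) ^ n = x \<Longrightarrow> y ^ n = y \<Longrightarrow> (x / y) ^ n = x / y"
  by (simp add: power_divide)
lemma sub_one: "(1::'a) ^ n = 1" by simp
lemma sub_zero: "n > 0 \<Longrightarrow> (0::'a) ^ n = 0" by simp

lemma F_sub_K: "(x::'a) ^ q = x \<Longrightarrow> x ^ (q ^ r) = x" by (rule pow_iter)

lemma F_q1: "(x::'a) ^ q = x \<longleftrightarrow> x ^ (q ^ 1) = x" by simp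

lemma trace_add: "trace q k (x + y :: 'a) = trace q k x + trace q k y"
  by (simp add: trace_def frob_add sum.distrib)

lemma trace_neg: "trace q k (- x :: 'a) = - trace q k x"
  by (simp add: trace_def frob_neg sum_negf)

lemma trace_diff: "trace q k (x - y :: 'a) = trace q k x - trace q k y"
  by (simp add: trace_def frob_diff sum_subtractf)

lemma trace_zero: "trace q k (0::'a) = 0"
  using q_gt1 by (simp add: trace_def zero_power)

lemma trace_scal: "(c::'a) ^ q = c \<Longrightarrow> trace q k (c * x) = c * trace q k x"
  by (simp add: trace_def power_mult_distrib pow_iter sum_distrib_left)

lemma trace_in_F:
  assumes "(x::'a) ^ (q ^ k) = x"
  shows "(trace q k x) ^ q = trace q k x"
proof -
  have "(trace q k x) ^ q = (trace q k x) ^ (q ^ 1)" by simp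
  also have "\<dots> = (\<Sum>i<k. x ^ (q ^ Suc i))"
    unfolding trace_def frob_sum by (simp add: power_mult[symmetric] mult.commute)
  also have "\<dots> = trace q k x"
  proof -
    have "(\<Sum>i<k. x ^ (q ^ Suc i)) + x ^ (q ^ 0) = x ^ (q ^ 0) + (\<Sum>i<k. x ^ (q ^ Suc i))"
      by simp
    also have "\<dots> = (\<Sum>i<Suc k. x ^ (q ^ i))" by (rule sum.lessThan_Suc_shift[symmetric])
    also have "\<dots> = trace q k x + x ^ (q ^ 0)" using assms by (simp add: trace_def)
    finally show ?thesis by simp
  qed
  finally show ?thesis .
qed

lemma pow_rr: "(z::'a) ^ (q ^ r * q ^ r) = z"
  using pow_card m_def by (simp add: power_add[symmetric] mult_2)

lemma trace_m_split: "trace q m (z::'a) = trace q r (z + z ^ (q ^ r))"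
proof -
  have "trace q m z = (\<Sum>i<r + r. z ^ (q ^ i))" by (simp add: trace_def m_def mult_2)
  also have "\<dots> = (\<Sum>i<r. z ^ (q ^ i)) + (\<Sum>i<r. z ^ (q ^ (r + i)))"
    by (rule sum_lessThan_add_split)
  also have "(\<Sum>i<r. z ^ (q ^ (r + i))) = (\<Sum>i<r. (z ^ (q ^ r)) ^ (q ^ i))"
    by (simp add: power_add power_mult)
  finally show ?thesis by (simp add: trace_def frob_add sum.distrib)
qed

lemma trace_m_F: "(trace q m (z::'a)) ^ q = trace q m z"
  by (rule trace_in_F) (rule pow_card)

lemma T_in_K: "(z + z ^ (q ^ r) :: 'a) ^ (q ^ r) = z + z ^ (q ^ r)"
  by (simp add: frob_add power_mult[symmetric] pow_rr add.commute)

lemma N_in_K: "(z * z ^ (q ^ r) :: 'a) ^ (q ^ r) = z * z ^ (q ^ r)"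
  by (simp add: power_mult_distrib power_mult[symmetric] pow_rr mult.commute)

end


lemma sum_eq_bound:
  fixes g :: "'b \<Rightarrow> nat"
  assumes "finite A" "\<forall>s\<in>A. g s \<le> B" "sum g A = card A * B"
  shows "\<forall>s\<in>A. g s = B"
proof (rule ccontr)
  assume "\<not> ?thesis"
  then obtain s0 where "s0 \<in> A" "g s0 < B" using assms(2) by force
  hence "sum g A < sum (\<lambda>_. B) A"
    using assms by (intro sum_strict_mono_ex1) auto
  thus False using assms(3) by simp
qed

context ffield
begin

abbreviation Fs where "Fs \<equiv> {x::'a. x ^ q = x}"
abbreviation Ks where "Ks \<equiv> {x::'a. x ^ (q ^ r) = x}"

lemma ker_card_le: "card {x::'a. trace q r x = 0} \<le> q ^ (r - 1)"
proof -
  define P :: "'a poly" where "P = (\<Sum>i<r. monom 1 (q ^ i))"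
  have "coeff P (q ^ (r - 1)) = (\<Sum>i<r. if q ^ i = q ^ (r - 1) then 1 else 0)"
    by (simp add: P_def coeff_sum)
  also have "\<dots> = (\<Sum>i<r. if i = r - 1 then 1 else 0)"
    using q_gt1 by (intro sum.cong) (auto simp: power_inject_exp)
  also have "\<dots> = 1" using r_ge by simp
  finally have P0: "P \<noteq> 0" by auto
  have "degree P \<le> q ^ (r - 1)" unfolding P_def
  proof (rule degree_sum_le)
    fix i assume "i \<in> {..<r}"
    hence "q ^ i \<le> q ^ (r - 1)" using q_gt1 by (intro power_increasing) auto
    thus "degree (monom (1::'a) (q ^ i)) \<le> q ^ (r - 1)" using degree_monom_le order_trans by blast
  qed simp
  moreover have "{x. poly P x = 0} = {x::'a. trace q r x = 0}"
    by (simp add: P_def poly_sum poly_monom trace_def)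
  ultimately show ?thesis using card_poly_roots_bound[OF P0] by simp
qed

lemma trace_K_F: "t \<in> Ks \<Longrightarrow> trace q r t \<in> Fs"
  using trace_in_F by simp

lemma fib_card1: "s \<in> Fs \<Longrightarrow> card {t\<in>Ks. trace q r t = s} = q ^ (r - 1)"
proof -
  let ?f = "\<lambda>s. card {t\<in>Ks. trace q r t = s}"
  have le: "\<forall>s\<in>Fs. ?f s \<le> q ^ (r - 1)"
  proof
    fix s assume "s \<in> Fs"
    show "?f s \<le> q ^ (r - 1)"
    proof (cases "{t\<in>Ks. trace q r t = s} = {}")
      case False
      then obtain t0 where t0: "t0 \<in> Ks" "trace q r t0 = s" by auto
      have "inj_on (\<lambda>t. t - t0) {t\<in>Ks. trace q r t = s}" by (auto simp: inj_on_def)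
      hence "?f s = card ((\<lambda>t. t - t0) ` {t\<in>Ks. trace q r t = s})" by (simp add: card_image)
      also have "\<dots> \<le> card {x::'a. trace q r x = 0}"
        by (rule card_mono) (use t0 in \<open>auto simp: trace_diff\<close>)
      finally show ?thesis using ker_card_le by simp
    next
      case True thus ?thesis by (metis card.empty zero_le)
    qed
  qed
  have "(\<Sum>s\<in>Fs. ?f s) = (\<Sum>s\<in>Fs. \<Sum>x\<in>{x\<in>Ks. trace q r x = s}. 1)" by simp
  also have "\<dots> = (\<Sum>x\<in>Ks. 1)"
    by (rule sum.group) (use trace_K_F in auto)
  also have "\<dots> = q ^ r" using card_K by simp
  also have "\<dots> = card Fs * q ^ (r - 1)" using card_F r_ge
    by (metis Suc_diff_1 less_le_trans pos2 power_Suc)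
  finally have "\<forall>s\<in>Fs. ?f s = q ^ (r - 1)" using sum_eq_bound[OF _ le] by simp
  thus "s \<in> Fs \<Longrightarrow> ?f s = q ^ (r - 1)" by blast
qed

lemma fib_card1g:
  assumes g: "\<gamma> \<in> Ks" "\<gamma> \<noteq> 0" and s: "s \<in> Fs"
  shows "card {t\<in>Ks. trace q r (\<gamma> * t) = s} = q ^ (r - 1)"
proof -
  have "{t\<in>Ks. trace q r (\<gamma> * t) = s} = (\<lambda>u. u / \<gamma>) ` {t\<in>Ks. trace q r t = s}"
  proof (intro equalityI subsetI)
    fix t assume t: "t \<in> {t\<in>Ks. trace q r (\<gamma> * t) = s}"
    have "t = (\<gamma> * t) / \<gamma>" using g by simp
    moreover have "\<gamma> * t \<in> {t\<in>Ks. trace q r t = s}" using t g by (auto simp: power_mult_distrib)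
    ultimately show "t \<in> (\<lambda>u. u / \<gamma>) ` {t\<in>Ks. trace q r t = s}" by blast
  next
    fix t assume "t \<in> (\<lambda>u. u / \<gamma>) ` {t\<in>Ks. trace q r t = s}"
    then obtain u where u: "u \<in> Ks" "trace q r u = s" "t = u / \<gamma>" by auto
    thus "t \<in> {t\<in>Ks. trace q r (\<gamma> * t) = s}" using g by (auto simp: power_divide)
  qed
  moreover have "inj_on (\<lambda>u. u / \<gamma>) {t\<in>Ks. trace q r t = s}" using g by (auto simp: inj_on_def)
  ultimately show ?thesis using fib_card1[OF s] by (simp add: card_image)
qed


lemma F_in_K: "x \<in> Fs \<Longrightarrow> x \<in> Ks" using F_sub_K by simp

lemma exists_t0: "\<exists>t0\<in>Ks. trace q r t0 = 1"
proof -
  have "card {t\<in>Ks. trace q r t = 1} = q ^ (r - 1)" by (rule fib_card1) simp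
  hence "{t\<in>Ks. trace q r t = 1} \<noteq> {}" using q_gt1 by (metis card.empty power_not_zero zero_less_one not_one_less_zero neq0_conv less_trans)
  thus ?thesis by auto
qed

lemma exists_t1:
  assumes g: "\<gamma> \<in> Ks" "\<gamma> \<notin> Fs"
  shows "\<exists>t1\<in>Ks. trace q r t1 = 0 \<and> trace q r (\<gamma> * t1) = 1"
proof (rule ccontr)
  assume na: "\<not> ?thesis"
  have z: "trace q r (\<gamma> * t) = 0" if t: "t \<in> Ks" "trace q r t = 0" for t
  proof (rule ccontr)
    assume u0: "trace q r (\<gamma> * t) \<noteq> 0"
    define u where "u = trace q r (\<gamma> * t)"
    have uF: "u \<in> Fs" unfolding u_def using g t by (intro trace_K_F) (simp add: power_mult_distrib)
    have iuF: "inverse u ^ q = inverse u" using uF by (simp add: power_inverse)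
    have "t * inverse u \<in> Ks" using t F_in_K[of "inverse u"] iuF by (simp add: power_mult_distrib)
    moreover have "trace q r (t * inverse u) = 0"
      using trace_scal[OF iuF, of r t] t by (simp add: mult.commute)
    moreover have "trace q r (\<gamma> * (t * inverse u)) = 1"
      using trace_scal[OF iuF, of r "\<gamma> * t"] u0 by (simp add: u_def mult_ac)
    ultimately show False using na by blast
  qed
  obtain t0 where t0: "t0 \<in> Ks" "trace q r t0 = 1" using exists_t0 by blast
  define c0 where "c0 = trace q r (\<gamma> * t0)"
  have c0F: "c0 \<in> Fs" unfolding c0_def using g t0 by (intro trace_K_F) (simp add: power_mult_distrib)
  have gc: "\<gamma> - c0 \<in> Ks" "\<gamma> - c0 \<noteq> 0" using g c0F F_in_K[OF c0F] by (auto simp: frob_diff)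
  have "\<forall>t\<in>Ks. trace q r ((\<gamma> - c0) * t) = 0"
  proof
    fix t assume t: "t \<in> Ks"
    define a where "a = trace q r t"
    have aF: "a \<in> Fs" unfolding a_def using t by (rule trace_K_F)
    have "t - a * t0 \<in> Ks" using t t0 F_in_K[OF aF] by (simp add: frob_diff power_mult_distrib)
    moreover have "trace q r (t - a * t0) = 0"
      using aF t0 by (simp add: trace_diff trace_scal a_def)
    ultimately have "trace q r (\<gamma> * (t - a * t0)) = 0" by (rule z)
    hence "trace q r (\<gamma> * t) - a * c0 = 0"
      using aF by (simp add: right_diff_distrib trace_diff c0_def trace_scal mult.left_commute[of \<gamma> a])
    moreover have "trace q r ((\<gamma> - c0) * t) = trace q r (\<gamma> * t) - c0 * trace q r t"
      using c0F by (simp add: left_diff_distrib trace_diff trace_scal)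
    ultimately show "trace q r ((\<gamma> - c0) * t) = 0" by (simp add: a_def mult.commute)
  qed
  hence E: "{t\<in>Ks. trace q r ((\<gamma> - c0) * t) = 1} = {}" by auto
  have Cd: "card {t\<in>Ks. trace q r ((\<gamma> - c0) * t) = 1} = q ^ (r - 1)"
    using gc by (intro fib_card1g) auto
  have "card ({}::'a set) = q ^ (r - 1)" using Cd unfolding E .
  thus False using q_gt1 by simp
qed

lemma fib_card2:
  assumes g: "\<gamma> \<in> Ks" "\<gamma> \<notin> Fs" and cs: "c \<in> Fs" "s \<in> Fs"
  shows "card {t\<in>Ks. trace q r t = c \<and> trace q r (\<gamma> * t) = s} = q ^ (r - 2)"
proof -
  define fib where "fib = (\<lambda>(c, s). {t\<in>Ks. trace q r t = c \<and> trace q r (\<gamma> * t) = s})"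
  obtain t0 where t0: "t0 \<in> Ks" "trace q r t0 = 1" using exists_t0 by blast
  obtain t1 where t1: "t1 \<in> Ks" "trace q r t1 = 0" "trace q r (\<gamma> * t1) = 1" using exists_t1[OF g] by blast
  define c0 where "c0 = trace q r (\<gamma> * t0)"
  have c0F: "c0 \<in> Fs" unfolding c0_def using g t0 by (intro trace_K_F) (simp add: power_mult_distrib)
  have ne: "fib (c, s) \<noteq> {}" if cs: "c \<in> Fs" "s \<in> Fs" for c s
  proof -
    define t where "t = c * t0 + (s - c * c0) * t1"
    have "s - c * c0 \<in> Fs" using cs c0F by (simp add: frob_diff[of _ _ 1, simplified] power_mult_distrib)
    hence "t \<in> Ks" unfolding t_def using cs t0 t1 F_in_K
      by (simp add: frob_add power_mult_distrib)
    moreover have "trace q r t = c"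
      using cs t0 t1 \<open>s - c * c0 \<in> Fs\<close> by (simp add: t_def trace_add trace_scal)
    moreover have "trace q r (\<gamma> * t) = s"
      using cs t0 t1 \<open>s - c * c0 \<in> Fs\<close>
      by (simp add: t_def trace_add trace_scal distrib_left mult.left_commute[of \<gamma>] c0_def[symmetric])
    ultimately show ?thesis unfolding fib_def by auto
  qed
  define \<kappa> where "\<kappa> = card (fib (0, 0))"
  have fc: "card (fib (c, s)) = \<kappa>" if cs: "c \<in> Fs" "s \<in> Fs" for c s
  proof -
    obtain tw where tw: "tw \<in> fib (c, s)" using ne[OF cs] by blast
    have "fib (c, s) = (\<lambda>k. k + tw) ` fib (0, 0)"
    proof (intro equalityI subsetI)
      fix t assume t: "t \<in> fib (c, s)"
      have "t - tw \<in> fib (0, 0)" using t tw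
        by (simp add: fib_def frob_diff trace_diff right_diff_distrib)
      thus "t \<in> (\<lambda>k. k + tw) ` fib (0, 0)" by (metis diff_add_cancel imageI)
    next
      fix t assume "t \<in> (\<lambda>k. k + tw) ` fib (0, 0)"
      then obtain k where k: "k \<in> fib (0, 0)" "t = k + tw" by auto
      thus "t \<in> fib (c, s)" using tw by (simp add: fib_def frob_add trace_add distrib_left)
    qed
    moreover have "inj_on (\<lambda>k. k + tw) (fib (0, 0))" by (simp add: inj_on_def)
    ultimately show ?thesis by (simp add: card_image \<kappa>_def)
  qed
  have "(\<Sum>cs\<in>Fs \<times> Fs. card (fib cs)) = (\<Sum>cs\<in>Fs \<times> Fs. \<Sum>x\<in>{x\<in>Ks. (\<lambda>t. (trace q r t, trace q r (\<gamma> * t))) x = cs}. 1)"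
    by (intro sum.cong) (auto simp: fib_def)
  also have "\<dots> = (\<Sum>x\<in>Ks. 1)"
    by (rule sum.group) (use g in \<open>auto intro!: trace_K_F simp: power_mult_distrib\<close>)
  also have "\<dots> = q ^ r" using card_K by simp
  finally have "(\<Sum>cs\<in>Fs \<times> Fs. card (fib cs)) = q ^ r" .
  moreover have "(\<Sum>cs\<in>Fs \<times> Fs. card (fib cs)) = q * q * \<kappa>"
  proof -
    have "(\<Sum>cs\<in>Fs \<times> Fs. card (fib cs)) = (\<Sum>cs\<in>Fs \<times> Fs. \<kappa>)"
      by (intro sum.cong refl) (clarsimp simp: fc)
    thus ?thesis using card_F by (simp add: card_cartesian_product)
  qed
  moreover have "q ^ r = q * q * q ^ (r - 2)"
  proof -
    define j where "j = r - 2"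
    have rj: "r = j + 2" using r_ge j_def by arith
    show ?thesis unfolding rj by (simp add: power_add power2_eq_square j_def[symmetric] mult_ac)
  qed
  ultimately have "q * q * \<kappa> = q * q * q ^ (r - 2)" by simp
  hence "\<kappa> = q ^ (r - 2)" using q_gt1 by simp
  thus ?thesis using fc[OF cs] by (simp add: fib_def)
qed

end


lemma quad_roots:
  fixes y y1 t n :: "'a::field"
  assumes "y1 * y1 - t * y1 + n = 0" "y * y - t * y + n = 0"
  shows "y = y1 \<or> y = t - y1"
proof -
  have "(y - y1) * (y + y1 - t) = (y * y - t * y + n) - (y1 * y1 - t * y1 + n)"
    by (simp add: algebra_simps)
  also have "\<dots> = 0" using assms by simp
  finally have "(y - y1) * (y + y1 - t) = 0" .
  hence "y - y1 = 0 \<or> y + y1 - t = 0" by (simp only: mult_eq_0_iff)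
  thus ?thesis by (auto simp: eq_diff_eq)
qed

lemma quad_card:
  fixes t n :: "'a::field"
  shows "card {y. y * y - t * y + n = 0} \<le> 2"
proof (cases "{y. y * y - t * y + n = 0} = {}")
  case False
  then obtain y1 where y1: "y1 * y1 - t * y1 + n = 0" by auto
  have "{y. y * y - t * y + n = 0} \<subseteq> {y1, t - y1}" using quad_roots[OF y1] by auto
  hence "card {y. y * y - t * y + n = 0} \<le> card {y1, t - y1}" by (intro card_mono) auto
  also have "\<dots> \<le> 2" by (simp add: card_insert_if)
  finally show ?thesis .
next
  case True thus ?thesis by (metis card.empty zero_le)
qed

lemma quad_eqv: "(t * z - z * z = (n::'a::field)) = (z * z - t * z + n = 0)"
  by (auto simp: algebra_simps)

context ffield
begin

definition Tm :: "'a \<Rightarrow> 'a" where "Tm z = z + z ^ (q ^ r)"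
definition Nm :: "'a \<Rightarrow> 'a" where "Nm z = z * z ^ (q ^ r)"

definition afib where "afib t n = card {x. Tm x = t \<and> Nm x = n}"
definition bfib where "bfib t n = card {z\<in>Ks. z * z - t * z + n = 0}"

lemma ab_le2:
  assumes tK: "t \<in> Ks" and nK: "n \<in> Ks"
  shows "afib t n + bfib t n \<le> 2"
proof -
  define R where "R = {y. y * y - t * y + n = 0}"
  have R2: "card R \<le> 2" unfolding R_def by (rule quad_card)
  have fR: "{x. Tm x = t \<and> Nm x = n} \<subseteq> R"
    unfolding R_def Tm_def Nm_def by (auto simp: algebra_simps)
  have kR: "{z\<in>Ks. z * z - t * z + n = 0} \<subseteq> R" unfolding R_def by auto
  have a2: "afib t n \<le> card R" unfolding afib_def by (rule card_mono[OF _ fR]) simp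
  have b2: "bfib t n \<le> card R" unfolding bfib_def by (rule card_mono[OF _ kR]) simp
  show ?thesis
  proof (cases "afib t n = 0 \<or> bfib t n = 0")
    case True thus ?thesis using a2 b2 R2 by auto
  next
    case False
    have ne1: "{x. Tm x = t \<and> Nm x = n} \<noteq> {}" using False unfolding afib_def by auto
    have ne2: "{z\<in>Ks. z * z - t * z + n = 0} \<noteq> {}" using False unfolding bfib_def by auto
    obtain x where x: "Tm x = t" "Nm x = n" using ne1 by auto
    obtain z where z: "z \<in> Ks" "z * z - t * z + n = 0" using ne2 by auto
    have xR: "x * x - t * x + n = 0" using x unfolding Tm_def Nm_def by (auto simp: algebra_simps)
    have "x = z \<or> x = t - z" by (rule quad_roots[OF z(2) xR])
    hence "x \<in> Ks" using z tK by (auto simp: frob_diff)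
    hence tx: "t = x + x" using x by (simp add: Tm_def)
    have "R \<subseteq> {x}" using quad_roots[OF xR] tx unfolding R_def by auto
    hence "card R \<le> card {x}" by (intro card_mono) auto
    hence "card R \<le> 1" by simp
    thus ?thesis using a2 b2 by simp
  qed
qed

lemma fib_sums:
  "(\<Sum>tn\<in>Ks \<times> Ks. afib (fst tn) (snd tn)) = q ^ m"
  "(\<Sum>tn\<in>Ks \<times> Ks. bfib (fst tn) (snd tn)) = q ^ m"
proof -
  have "(\<Sum>tn\<in>Ks \<times> Ks. afib (fst tn) (snd tn)) =
        (\<Sum>tn\<in>Ks \<times> Ks. \<Sum>x\<in>{x\<in>UNIV. (\<lambda>x. (Tm x, Nm x)) x = tn}. 1)"
    by (intro sum.cong refl) (auto simp: afib_def prod_eq_iff)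
  also have "\<dots> = (\<Sum>x\<in>(UNIV::'a set). 1)"
    using sum.group[of UNIV "Ks \<times> Ks" "\<lambda>x. (Tm x, Nm x)" "\<lambda>_. 1::nat"]
    by (simp add: image_subset_iff Tm_def Nm_def T_in_K N_in_K)
  also have "\<dots> = q ^ m" using card_univ by simp
  finally show "(\<Sum>tn\<in>Ks \<times> Ks. afib (fst tn) (snd tn)) = q ^ m" .
next
  have "(\<Sum>tn\<in>Ks \<times> Ks. bfib (fst tn) (snd tn)) =
        (\<Sum>tn\<in>Ks \<times> Ks. \<Sum>x\<in>{x\<in>Ks \<times> Ks. (\<lambda>(t, z). (t, t * z - z * z)) x = tn}. 1)"
  proof (intro sum.cong refl)
    fix tn assume tn: "tn \<in> Ks \<times> Ks"
    obtain t n where tn': "tn = (t, n)" by force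
    have "{x\<in>Ks \<times> Ks. (\<lambda>(t, z). (t, t * z - z * z)) x = tn} =
          (\<lambda>z. (t, z)) ` {z\<in>Ks. z * z - t * z + n = 0}"
      using tn unfolding tn' by (auto simp: algebra_simps)
    moreover have "inj_on (\<lambda>z. (t, z)) {z\<in>Ks. z * z - t * z + n = 0}" by (auto simp: inj_on_def)
    ultimately show "bfib (fst tn) (snd tn) = (\<Sum>x\<in>{x\<in>Ks \<times> Ks. (\<lambda>(t, z). (t, t * z - z * z)) x = tn}. 1)"
      unfolding tn' bfib_def by (simp add: card_image)
  qed
  also have "\<dots> = (\<Sum>x\<in>Ks \<times> Ks. 1)"
    using sum.group[of "Ks \<times> Ks" "Ks \<times> Ks" "\<lambda>(t, z). (t, t * z - z * z)" "\<lambda>_. 1::nat"]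
    by (simp add: image_subset_iff frob_diff power_mult_distrib)
  also have "\<dots> = q ^ m" using card_K m_def by (simp add: card_cartesian_product mult_2 power_add)
  finally show "(\<Sum>tn\<in>Ks \<times> Ks. bfib (fst tn) (snd tn)) = q ^ m" .
qed

lemma ab_eq2:
  assumes "t \<in> Ks" "n \<in> Ks"
  shows "afib t n + bfib t n = 2"
proof -
  have eqs: "(\<Sum>tn\<in>Ks \<times> Ks. afib (fst tn) (snd tn) + bfib (fst tn) (snd tn)) = card (Ks \<times> Ks) * 2"
    using fib_sums card_K m_def by (simp add: sum.distrib card_cartesian_product mult_2 power_add)
  have le: "\<forall>s\<in>Ks \<times> Ks. afib (fst s) (snd s) + bfib (fst s) (snd s) \<le> 2"
    using ab_le2 by (simp add: mem_Times_iff)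
  have "\<forall>tn\<in>Ks \<times> Ks. afib (fst tn) (snd tn) + bfib (fst tn) (snd tn) = 2"
    by (rule sum_eq_bound[OF _ le eqs]) simp
  thus ?thesis using assms by auto
qed

lemma fibration:
  assumes S: "S \<subseteq> Ks \<times> Ks"
  shows "card {x. (Tm x, Nm x) \<in> S} + card {tz\<in>Ks \<times> Ks. (fst tz, fst tz * snd tz - snd tz * snd tz) \<in> S}
         = 2 * card S"
proof -
  have fS: "finite S" using S by (rule finite_subset) simp
  have 1: "card {x. (Tm x, Nm x) \<in> S} = (\<Sum>tn\<in>S. afib (fst tn) (snd tn))"
  proof -
    have "card {x. (Tm x, Nm x) \<in> S} = (\<Sum>x\<in>{x. (Tm x, Nm x) \<in> S}. 1)" by simp
    also have "\<dots> = (\<Sum>tn\<in>S. \<Sum>x\<in>{x\<in>{x. (Tm x, Nm x) \<in> S}. (\<lambda>x. (Tm x, Nm x)) x = tn}. 1)"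
      using sum.group[of "{x. (Tm x, Nm x) \<in> S}" S "\<lambda>x. (Tm x, Nm x)" "\<lambda>_. 1::nat"] fS
      by (simp add: image_subset_iff)
    also have "\<dots> = (\<Sum>tn\<in>S. afib (fst tn) (snd tn))"
    proof (intro sum.cong refl)
      fix tn assume "tn \<in> S"
      hence "{x\<in>{x. (Tm x, Nm x) \<in> S}. (\<lambda>x. (Tm x, Nm x)) x = tn} = {x. Tm x = fst tn \<and> Nm x = snd tn}"
        by (auto simp: prod_eq_iff)
      thus "(\<Sum>x\<in>{x\<in>{x. (Tm x, Nm x) \<in> S}. (\<lambda>x. (Tm x, Nm x)) x = tn}. 1) = afib (fst tn) (snd tn)"
        by (simp add: afib_def)
    qed
    finally show ?thesis .
  qed
  have 2: "card {tz\<in>Ks \<times> Ks. (fst tz, fst tz * snd tz - snd tz * snd tz) \<in> S} = (\<Sum>tn\<in>S. bfib (fst tn) (snd tn))"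
  proof -
    let ?A = "{tz\<in>Ks \<times> Ks. (fst tz, fst tz * snd tz - snd tz * snd tz) \<in> S}"
    let ?g = "\<lambda>tz. (fst tz, fst tz * snd tz - snd tz * snd tz)"
    have "card ?A = (\<Sum>x\<in>?A. 1)" by simp
    also have "\<dots> = (\<Sum>tn\<in>S. \<Sum>x\<in>{x\<in>?A. ?g x = tn}. 1)"
      using sum.group[of ?A S ?g "\<lambda>_. 1::nat"] fS by (simp add: image_subset_iff)
    also have "\<dots> = (\<Sum>tn\<in>S. bfib (fst tn) (snd tn))"
    proof (intro sum.cong refl)
      fix tn assume tn: "tn \<in> S"
      obtain t n where tn': "tn = (t, n)" by force
      have tK: "t \<in> Ks" using tn S unfolding tn' by auto
      have "{x\<in>?A. ?g x = tn} = (\<lambda>z. (t, z)) ` {z\<in>Ks. z * z - t * z + n = 0}"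
      proof (intro equalityI subsetI)
        fix x assume x: "x \<in> {x\<in>?A. ?g x = tn}"
        obtain t' z where x': "x = (t', z)" by force
        have "t' = t" "z \<in> Ks" "t * z - z * z = n" using x unfolding x' tn' by auto
        hence "z \<in> {z\<in>Ks. z * z - t * z + n = 0}" by (auto simp: quad_eqv)
        thus "x \<in> (\<lambda>z. (t, z)) ` {z\<in>Ks. z * z - t * z + n = 0}" using x' \<open>t' = t\<close> by blast
      next
        fix x assume "x \<in> (\<lambda>z. (t, z)) ` {z\<in>Ks. z * z - t * z + n = 0}"
        then obtain z where z: "z \<in> Ks" "z * z - t * z + n = 0" "x = (t, z)" by auto
        have "t * z - z * z = n" using z(2) by (simp add: quad_eqv)
        thus "x \<in> {x\<in>?A. ?g x = tn}" using z tK tn unfolding tn' by auto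
      qed
      moreover have "inj_on (\<lambda>z. (t, z)) {z\<in>Ks. z * z - t * z + n = 0}" by (auto simp: inj_on_def)
      ultimately show "(\<Sum>x\<in>{x\<in>?A. ?g x = tn}. 1) = bfib (fst tn) (snd tn)"
        unfolding tn' bfib_def by (simp add: card_image)
    qed
    finally show ?thesis .
  qed
  have "(\<Sum>tn\<in>S. afib (fst tn) (snd tn)) + (\<Sum>tn\<in>S. bfib (fst tn) (snd tn)) = (\<Sum>tn\<in>S. 2)"
    unfolding sum.distrib[symmetric] using S by (intro sum.cong refl) (auto intro!: ab_eq2)
  thus ?thesis using 1 2 by simp
qed

end


lemma card_pairs_by_snd:
  assumes "finite A" "finite B"
  shows "card {p\<in>A \<times> B. P (fst p) (snd p)} = (\<Sum>b\<in>B. card {a\<in>A. P a b})"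
proof -
  let ?X = "{p\<in>A \<times> B. P (fst p) (snd p)}"
  have fX: "finite ?X" using assms by simp
  have "card ?X = (\<Sum>p\<in>?X. 1)" by simp
  also have "\<dots> = (\<Sum>b\<in>B. \<Sum>p\<in>{p\<in>?X. snd p = b}. 1)"
  proof -
    have sub: "snd ` ?X \<subseteq> B" by auto
    show ?thesis using sum.group[OF fX assms(2) sub, of "\<lambda>_. 1::nat"] by simp
  qed
  also have "\<dots> = (\<Sum>b\<in>B. card {a\<in>A. P a b})"
  proof (intro sum.cong refl)
    fix b assume b: "b \<in> B"
    have "{p\<in>?X. snd p = b} = (\<lambda>a. (a, b)) ` {a\<in>A. P a b}" using b by force
    moreover have "inj_on (\<lambda>a. (a, b)) {a\<in>A. P a b}" by (auto simp: inj_on_def)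
    ultimately show "(\<Sum>p\<in>{p\<in>?X. snd p = b}. 1) = card {a\<in>A. P a b}" by (simp add: card_image)
  qed
  finally show ?thesis .
qed

context ffield
begin

lemma Nm_pow: "(x::'a) ^ (q ^ r + 1) = Nm x"
  by (simp add: Nm_def)

lemma Tm_K: "Tm x \<in> Ks" by (simp add: Tm_def T_in_K)
lemma Nm_K: "Nm x \<in> Ks" by (simp add: Nm_def N_in_K)

lemma K_mult: "a \<in> Ks \<Longrightarrow> b \<in> Ks \<Longrightarrow> a * b \<in> Ks" by (simp add: power_mult_distrib)
lemma K_diff: "a \<in> Ks \<Longrightarrow> b \<in> Ks \<Longrightarrow> a - b \<in> Ks" by (simp add: frob_diff)

lemma card_Dset: "card {x::'a. trace q r (x ^ (q ^ r + 1)) = 0} = q ^ (r - 1) * (q ^ r - q + 1)"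
proof -
  define A where "A = {n\<in>Ks. trace q r n = 0}"
  have cA: "card A = q ^ (r - 1)" unfolding A_def by (rule fib_card1) (use q_gt1 in simp)
  have S: "Ks \<times> A \<subseteq> Ks \<times> Ks" unfolding A_def by auto
  have e1: "{x. (Tm x, Nm x) \<in> Ks \<times> A} = {x::'a. trace q r (x ^ (q ^ r + 1)) = 0}"
    by (auto simp: A_def Nm_def Tm_def T_in_K N_in_K)
  have e2: "{tz\<in>Ks \<times> Ks. (fst tz, fst tz * snd tz - snd tz * snd tz) \<in> Ks \<times> A} =
            {tz\<in>Ks \<times> Ks. trace q r (snd tz * fst tz) = trace q r (snd tz * snd tz)}"
    by (auto simp: A_def trace_diff mult.commute frob_diff power_mult_distrib)
  have "card {tz\<in>Ks \<times> Ks. trace q r (snd tz * fst tz) = trace q r (snd tz * snd tz)}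
        = (\<Sum>z\<in>Ks. card {t\<in>Ks. trace q r (z * t) = trace q r (z * z)})"
    by (rule card_pairs_by_snd) simp_all
  also have "\<dots> = card {t\<in>Ks. trace q r (0 * t) = trace q r (0 * 0)} +
                  (\<Sum>z\<in>Ks - {0}. card {t\<in>Ks. trace q r (z * t) = trace q r (z * z)})"
    by (subst sum.remove[of _ 0]) (use q_gt1 in simp_all)
  also have "(\<Sum>z\<in>Ks - {0}. card {t\<in>Ks. trace q r (z * t) = trace q r (z * z)}) =
             (\<Sum>z\<in>Ks - {0}. q ^ (r - 1))"
    by (intro sum.cong refl fib_card1g) (auto intro!: trace_in_F simp: power_mult_distrib)
  also have "card {t\<in>Ks. trace q r (0 * t) = trace q r (0 * 0)} = q ^ r"
    using card_K by simp
  also have "(\<Sum>z\<in>Ks - {0}. q ^ (r - 1)) = (q ^ r - 1) * q ^ (r - 1)"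
  proof -
    have "card (Ks - {0}) = q ^ r - 1" using card_K q_gt1 by (subst card_Diff_singleton) auto
    thus ?thesis by simp
  qed
  finally have c2: "card {tz\<in>Ks \<times> Ks. (fst tz, fst tz * snd tz - snd tz * snd tz) \<in> Ks \<times> A}
      = q ^ r + (q ^ r - 1) * q ^ (r - 1)" unfolding e2 .
  have main: "card {x::'a. trace q r (x ^ (q ^ r + 1)) = 0} + (q ^ r + (q ^ r - 1) * q ^ (r - 1))
       = 2 * (q ^ r * q ^ (r - 1))"
    using fibration[OF S] unfolding e1 c2 by (simp add: card_cartesian_product cA card_K)
  define u where "u = q ^ (r - 1)"
  have qr: "q ^ r = q * u" unfolding u_def using r_ge
    by (metis Suc_diff_1 less_le_trans pos2 power_Suc)
  have u1: "u \<ge> 1" unfolding u_def using q_gt1 by simp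
  define D0 where "D0 = card {x::'a. trace q r (x ^ (q ^ r + 1)) = 0}"
  have qu1: "q * u \<ge> 1" "q * u \<ge> q" using u1 q_gt1 by (simp_all add: Suc_le_eq)
  have "int (D0 + (q * u + (q * u - 1) * u)) = int (2 * (q * u * u))"
    using main unfolding qr u_def[symmetric] D0_def by (simp add: mult.assoc)
  hence m': "int D0 + (int q * int u + (int q * int u - 1) * int u) = 2 * (int q * int u * int u)"
    using qu1 by (simp add: of_nat_diff)
  have "int D0 = 2 * (int q * int u * int u) - (int q * int u + (int q * int u - 1) * int u)"
    using m' by (simp add: eq_diff_eq)
  also have "\<dots> = int u * (int q * int u - int q + 1)" by (simp add: algebra_simps)
  also have "\<dots> = int u * (int (q * u - q) + 1)" using qu1 by (simp add: of_nat_diff)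
  also have "\<dots> = int (u * (q * u - q + 1))" by (simp only: of_nat_mult of_nat_add of_nat_1)
  finally have "int D0 = int (u * (q * u - q + 1))" .
  hence "D0 = u * (q * u - q + 1)" by (simp only: of_nat_eq_iff)
  thus ?thesis unfolding D0_def u_def[symmetric] qr by simp
qed

end


context ffield
begin

lemma Tm_K': "Tm x ^ (q ^ r) = Tm x" using Tm_K by simp
lemma Nm_K': "Nm x ^ (q ^ r) = Nm x" using Nm_K by simp
lemma Nm_pow': "x ^ Suc (q ^ r) = Nm x" using Nm_pow by simp

lemma K_inv: "a \<in> Ks \<Longrightarrow> inverse a \<in> Ks" by (simp add: power_inverse)

lemma Nm_nz: "b \<noteq> 0 \<Longrightarrow> Nm b \<noteq> 0" by (simp add: Nm_def)

lemma Nm_div: "b \<noteq> 0 \<Longrightarrow> Nm (y / b) = inverse (Nm b) * Nm y"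
  by (simp add: Nm_def power_divide field_simps)

lemma R_lower:
  assumes \<beta>: "\<beta> \<in> Ks" "\<beta> \<noteq> 0" and c: "c \<in> Fs"
  shows "card {tz\<in>Ks \<times> Ks. trace q r (fst tz) = c \<and> trace q r (\<beta> * (fst tz * snd tz - snd tz * snd tz)) = 0}
         \<ge> q ^ (r - 1) * q ^ (r - 1)"
proof -
  define h where "h z = card {t\<in>Ks. trace q r t = c \<and> trace q r (\<beta> * (t * z - z * z)) = 0}" for z
  have R: "card {tz\<in>Ks \<times> Ks. trace q r (fst tz) = c \<and> trace q r (\<beta> * (fst tz * snd tz - snd tz * snd tz)) = 0}
        = (\<Sum>z\<in>Ks. h z)" unfolding h_def by (rule card_pairs_by_snd) simp_all
  define Z' where "Z' = {z\<in>Ks. \<beta> * z \<notin> Fs}"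
  have q0: "(0::'a) ^ q = 0" using q_gt1 by simp
  have Z'K: "insert 0 Z' \<subseteq> Ks" unfolding Z'_def using q_gt1 by auto
  have 0: "0 \<notin> Z'" unfolding Z'_def using q0 by simp
  have h0: "h 0 = q ^ (r - 1)"
    unfolding h_def using fib_card1[OF c] by (simp add: trace_zero)
  have hz: "h z = q ^ (r - 2)" if z: "z \<in> Z'" for z
  proof -
    have zK: "z \<in> Ks" and nF: "\<beta> * z \<notin> Fs" using z unfolding Z'_def by auto
    have "{t\<in>Ks. trace q r t = c \<and> trace q r (\<beta> * (t * z - z * z)) = 0}
        = {t\<in>Ks. trace q r t = c \<and> trace q r ((\<beta> * z) * t) = trace q r (\<beta> * z * z)}"
      by (auto simp: right_diff_distrib trace_diff mult_ac)
    also have "card \<dots> = q ^ (r - 2)"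
      using zK \<beta> nF c by (intro fib_card2) (auto intro!: trace_in_F simp: power_mult_distrib)
    finally show ?thesis unfolding h_def .
  qed
  have cZ: "card Z' = q ^ r - q"
  proof -
    have split: "Ks = Z' \<union> {z\<in>Ks. \<beta> * z \<in> Fs}" unfolding Z'_def by auto
    have "{z\<in>Ks. \<beta> * z \<in> Fs} = (\<lambda>l. l * inverse \<beta>) ` Fs"
    proof (intro equalityI subsetI)
      fix z assume z: "z \<in> {z\<in>Ks. \<beta> * z \<in> Fs}"
      have "z = (\<beta> * z) * inverse \<beta>" using \<beta> by simp
      thus "z \<in> (\<lambda>l. l * inverse \<beta>) ` Fs" using z by blast
    next
      fix z assume "z \<in> (\<lambda>l. l * inverse \<beta>) ` Fs"
      then obtain l where l: "l \<in> Fs" "z = l * inverse \<beta>" by auto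
      have "l \<in> Ks" using F_in_K[OF l(1)] .
      thus "z \<in> {z\<in>Ks. \<beta> * z \<in> Fs}" using l \<beta> by (auto simp: power_mult_distrib power_inverse)
    qed
    moreover have "inj_on (\<lambda>l. l * inverse \<beta>) Fs" using \<beta> by (auto simp: inj_on_def)
    ultimately have c2: "card {z\<in>Ks. \<beta> * z \<in> Fs} = q" using card_F by (simp add: card_image)
    have "card Ks = card Z' + card {z\<in>Ks. \<beta> * z \<in> Fs}"
      by (subst split, rule card_Un_disjoint) (auto simp: Z'_def)
    thus ?thesis using card_K c2 by simp
  qed
  have "(\<Sum>z\<in>Ks. h z) \<ge> (\<Sum>z\<in>insert 0 Z'. h z)"
    by (rule sum_mono2) (use Z'K in auto)
  moreover have "(\<Sum>z\<in>insert 0 Z'. h z) = q ^ (r - 1) + (q ^ r - q) * q ^ (r - 2)"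
  proof -
    have fZ: "finite Z'" unfolding Z'_def by simp
    have "(\<Sum>z\<in>insert 0 Z'. h z) = h 0 + (\<Sum>z\<in>Z'. h z)" using 0 fZ by simp
    also have "(\<Sum>z\<in>Z'. h z) = (\<Sum>z\<in>Z'. q ^ (r - 2))" by (rule sum.cong) (auto simp: hz)
    finally show ?thesis using h0 cZ by simp
  qed
  moreover have "q ^ (r - 1) + (q ^ r - q) * q ^ (r - 2) = q ^ (r - 1) * q ^ (r - 1)"
  proof -
    define v where "v = q ^ (r - 2)"
    define j where "j = r - 2"
    have rj: "r = j + 2" using r_ge j_def by arith
    have e1: "q ^ (r - 1) = q * v" unfolding v_def j_def[symmetric] rj by simp
    have e2: "q ^ r = q * q * v" unfolding v_def j_def[symmetric] rj by (simp add: power_add power2_eq_square mult_ac)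
    have v1: "v \<ge> 1" unfolding v_def using q_gt1 by simp
    have "q * q * v \<ge> q" using v1 q_gt1 by (metis le_trans mult_le_mono nat_mult_1 less_imp_le mult.commute le_square mult.assoc)
    hence "(q * q * v - q) * v = q * q * v * v - q * v" by (simp add: diff_mult_distrib)
    moreover have "q * v \<le> q * q * v * v" using v1 q_gt1
      by (metis mult.commute mult.left_commute mult_le_mono nat_le_linear not_less_eq_eq mult.assoc le_square le_trans less_imp_le nat_mult_1_right mult_le_cancel1 order.refl)
    ultimately show ?thesis unfolding e1 e2 v_def[symmetric] by (simp add: mult_ac)
  qed
  ultimately show ?thesis using R by simp
qed

lemma count_bound:
  assumes b: "b \<noteq> 0" and c: "c \<in> Fs"
  shows "card {x\<in>{x::'a. trace q r (x ^ (q ^ r + 1)) = 0}. trace q m (b * x) = c} \<le> q ^ (r - 1) * q ^ (r - 1)"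
proof -
  define \<beta> where "\<beta> = inverse (Nm b)"
  have \<beta>: "\<beta> \<in> Ks" "\<beta> \<noteq> 0" unfolding \<beta>_def using Nm_nz[OF b] Nm_K by (auto simp: power_inverse)
  define S where "S = {t\<in>Ks. trace q r t = c} \<times> {n\<in>Ks. trace q r (\<beta> * n) = 0}"
  have SK: "S \<subseteq> Ks \<times> Ks" unfolding S_def by auto
  have cS: "card S = q ^ (r - 1) * q ^ (r - 1)"
    unfolding S_def card_cartesian_product using fib_card1[OF c] fib_card1g[OF \<beta>, of 0] q_gt1 by simp
  define Y where "Y = {y. (Tm y, Nm y) \<in> S}"
  have eqY: "{x\<in>{x::'a. trace q r (x ^ (q ^ r + 1)) = 0}. trace q m (b * x) = c} = (\<lambda>y. y / b) ` Y"
  proof (intro equalityI subsetI)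
    fix x assume x: "x \<in> {x\<in>{x::'a. trace q r (x ^ (q ^ r + 1)) = 0}. trace q m (b * x) = c}"
    have "Nm ((b * x) / b) = \<beta> * Nm (b * x)" unfolding \<beta>_def by (rule Nm_div[OF b])
    hence "\<beta> * Nm (b * x) = Nm x" using b by simp
    hence "b * x \<in> Y" using x unfolding Y_def S_def
      by (auto simp: Tm_K' Nm_K' Nm_pow' trace_m_split Tm_def[symmetric] simp del: power_Suc)
    moreover have "x = (b * x) / b" using b by simp
    ultimately show "x \<in> (\<lambda>y. y / b) ` Y" by blast
  next
    fix x assume "x \<in> (\<lambda>y. y / b) ` Y"
    then obtain y where y: "y \<in> Y" "x = y / b" by auto
    have "Nm x = \<beta> * Nm y" unfolding y(2) \<beta>_def by (rule Nm_div[OF b])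
    moreover have "b * x = y" using b y(2) by simp
    ultimately show "x \<in> {x\<in>{x::'a. trace q r (x ^ (q ^ r + 1)) = 0}. trace q m (b * x) = c}"
      using y(1) unfolding Y_def S_def
      by (auto simp: Nm_pow' trace_m_split Tm_def[symmetric] simp del: power_Suc)
  qed
  have inj: "inj_on (\<lambda>y. y / b) Y" using b by (auto simp: inj_on_def)
  have fib: "card Y + card {tz\<in>Ks \<times> Ks. (fst tz, fst tz * snd tz - snd tz * snd tz) \<in> S} = 2 * card S"
    unfolding Y_def by (rule fibration[OF SK])
  have "{tz\<in>Ks \<times> Ks. (fst tz, fst tz * snd tz - snd tz * snd tz) \<in> S} =
        {tz\<in>Ks \<times> Ks. trace q r (fst tz) = c \<and> trace q r (\<beta> * (fst tz * snd tz - snd tz * snd tz)) = 0}"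
    unfolding S_def by (auto simp: frob_diff power_mult_distrib)
  hence "card Y \<le> q ^ (r - 1) * q ^ (r - 1)"
    using fib cS R_lower[OF \<beta> c] by simp
  thus ?thesis unfolding eqY using inj by (simp add: card_image)
qed

end


context ffield
begin

definition W :: "nat \<Rightarrow> 'a set" where
  "W k = {(\<Sum>j<k. a j * \<alpha> ^ j) | a. \<forall>j<k. a j \<in> Fs}"

lemma F_add: "a \<in> Fs \<Longrightarrow> b \<in> Fs \<Longrightarrow> a + b \<in> Fs"
  using frob_add[of a b 1] by simp
lemma F_mult: "a \<in> Fs \<Longrightarrow> b \<in> Fs \<Longrightarrow> a * b \<in> Fs"
  by (simp add: power_mult_distrib)
lemma F_neg: "a \<in> Fs \<Longrightarrow> - a \<in> Fs"
  using frob_neg[of a 1] by simp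
lemma F_diff: "a \<in> Fs \<Longrightarrow> b \<in> Fs \<Longrightarrow> a - b \<in> Fs"
  using frob_diff[of a b 1] by simp
lemma F_div: "a \<in> Fs \<Longrightarrow> b \<in> Fs \<Longrightarrow> a / b \<in> Fs"
  by (simp add: power_divide)
lemma F_0: "(0::'a) \<in> Fs" using q_gt1 by simp
lemma F_1: "(1::'a) \<in> Fs" by simp

lemma W_memI: "\<forall>j<k. a j \<in> Fs \<Longrightarrow> x = (\<Sum>j<k. a j * \<alpha> ^ j) \<Longrightarrow> x \<in> W k"
  unfolding W_def by auto

lemma W_card: "card (W k) \<le> q ^ k"
proof -
  have "W k \<subseteq> (\<lambda>a. \<Sum>j<k. a j * \<alpha> ^ j) ` (PiE {..<k} (\<lambda>_. Fs))"
  proof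
    fix w assume "w \<in> W k"
    then obtain a where a: "\<forall>j<k. a j \<in> Fs" "w = (\<Sum>j<k. a j * \<alpha> ^ j)" unfolding W_def by auto
    have "restrict a {..<k} \<in> PiE {..<k} (\<lambda>_. Fs)" using a by auto
    moreover have "w = (\<Sum>j<k. restrict a {..<k} j * \<alpha> ^ j)" using a by simp
    ultimately show "w \<in> (\<lambda>a. \<Sum>j<k. a j * \<alpha> ^ j) ` (PiE {..<k} (\<lambda>_. Fs))" by blast
  qed
  hence "card (W k) \<le> card (PiE {..<k} (\<lambda>_. Fs::'a set))"
    by (meson card_image_le card_mono finite_PiE finite_imageI finite_lessThan finite order_trans)
  also have "\<dots> = q ^ k" by (simp add: card_PiE card_F)
  finally show ?thesis .
qed

lemma W_add: "x \<in> W k \<Longrightarrow> y \<in> W k \<Longrightarrow> x + y \<in> W k"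
proof -
  assume "x \<in> W k" "y \<in> W k"
  then obtain a b where a: "\<forall>j<k. a j \<in> Fs" "x = (\<Sum>j<k. a j * \<alpha> ^ j)"
    and b: "\<forall>j<k. b j \<in> Fs" "y = (\<Sum>j<k. b j * \<alpha> ^ j)" unfolding W_def by auto
  have "x + y = (\<Sum>j<k. (a j + b j) * \<alpha> ^ j)" using a b by (simp add: sum.distrib distrib_right)
  moreover have "\<forall>j<k. a j + b j \<in> Fs" using a b F_add by blast
  ultimately show ?thesis by (intro W_memI[of k "\<lambda>j. a j + b j"]) auto
qed

lemma W_scal: "x \<in> W k \<Longrightarrow> c \<in> Fs \<Longrightarrow> c * x \<in> W k"
proof -
  assume "x \<in> W k" and c: "c \<in> Fs"
  then obtain a where a: "\<forall>j<k. a j \<in> Fs" "x = (\<Sum>j<k. a j * \<alpha> ^ j)" unfolding W_def by auto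
  have "c * x = (\<Sum>j<k. (c * a j) * \<alpha> ^ j)" using a by (simp add: sum_distrib_left mult.assoc)
  moreover have "\<forall>j<k. c * a j \<in> Fs" using a c F_mult by blast
  ultimately show ?thesis by (intro W_memI[of k "\<lambda>j. c * a j"]) auto
qed

lemma W_0: "0 \<in> W k"
proof -
  have "(0::'a) = (\<Sum>j<k. 0 * \<alpha> ^ j)" by simp
  moreover have "\<forall>j<k. (0::'a) \<in> Fs" using F_0 by blast
  ultimately show ?thesis by (intro W_memI[of k "\<lambda>j. 0"]) auto
qed

lemma W_pow: "j < k \<Longrightarrow> \<alpha> ^ j \<in> W k"
proof -
  assume j: "j < k"
  have e: "\<And>i. (if i = j then 1 else 0) * \<alpha> ^ i = (if i = j then \<alpha> ^ i else 0)" by simp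
  have "\<alpha> ^ j = (\<Sum>i<k. (if i = j then 1 else 0) * \<alpha> ^ i)" unfolding e using j by (simp add: sum.delta)
  moreover have "\<forall>i<k. (if i = j then 1 else 0::'a) \<in> Fs" using F_0 F_1 by auto
  ultimately show ?thesis by (intro W_memI[of k "\<lambda>i. if i = j then 1 else 0"]) auto
qed

lemma W_lin: "\<forall>j<k. a j \<in> Fs \<Longrightarrow> (\<Sum>j<k. a j * \<alpha> ^ j) \<in> W k"
  unfolding W_def by blast

lemma W_shift: "x \<in> W k \<Longrightarrow> \<alpha> * x \<in> W (Suc k)"
proof -
  assume "x \<in> W k"
  then obtain a where a: "\<forall>j<k. a j \<in> Fs" "x = (\<Sum>j<k. a j * \<alpha> ^ j)" unfolding W_def by auto
  define a' where "a' j = (if j = 0 then 0 else a (j - 1))" for j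
  have "(\<Sum>j<Suc k. a' j * \<alpha> ^ j) = a' 0 * \<alpha> ^ 0 + (\<Sum>j<k. a' (Suc j) * \<alpha> ^ Suc j)"
    by (rule sum.lessThan_Suc_shift)
  also have "\<dots> = \<alpha> * x" using a by (simp add: a'_def sum_distrib_left mult_ac)
  finally have "\<alpha> * x = (\<Sum>j<Suc k. a' j * \<alpha> ^ j)" by simp
  moreover have "\<forall>j<Suc k. a' j \<in> Fs" using a F_0 by (auto simp: a'_def)
  ultimately show ?thesis by (intro W_memI[of "Suc k" a']) auto
qed

lemma W_Suc_sub:
  assumes "\<alpha> ^ k \<in> W k"
  shows "W (Suc k) \<subseteq> W k"
proof
  fix x assume "x \<in> W (Suc k)"
  then obtain a where a: "\<forall>j<Suc k. a j \<in> Fs" "x = (\<Sum>j<Suc k. a j * \<alpha> ^ j)" unfolding W_def by auto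
  have "x = (\<Sum>j<k. a j * \<alpha> ^ j) + a k * \<alpha> ^ k" using a by simp
  moreover have "(\<Sum>j<k. a j * \<alpha> ^ j) \<in> W k" using a by (intro W_lin) auto
  moreover have "a k * \<alpha> ^ k \<in> W k" using a assms by (intro W_scal) auto
  ultimately show "x \<in> W k" using W_add by simp
qed

lemma W_all:
  assumes "\<alpha> ^ k \<in> W k"
  shows "k \<ge> m"
proof -
  have pw: "\<alpha> ^ N \<in> W k" for N
  proof (induction N)
    case 0 show ?case
    proof (cases "k = 0")
      case True thus ?thesis using assms by simp
    next
      case False thus ?thesis using W_pow[of 0 k] by simp
    qed
  next
    case (Suc N)
    show ?case
    proof (cases "Suc N < k")
      case True thus ?thesis by (rule W_pow)
    next
      case False
      hence "N \<ge> k \<or> Suc N = k" by auto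
      thus ?thesis
      proof
        assume "Suc N = k" thus ?thesis using assms by simp
      next
        assume "N \<ge> k"
        have "\<alpha> ^ Suc N = \<alpha> * \<alpha> ^ N" by simp
        also have "\<dots> \<in> W (Suc k)" using Suc.IH by (rule W_shift)
        finally show ?thesis using W_Suc_sub[OF assms] by blast
      qed
    qed
  qed
  have "UNIV \<subseteq> W k"
  proof
    fix x :: 'a
    show "x \<in> W k"
    proof (cases "x = 0")
      case True thus ?thesis using W_0 by simp
    next
      case False then obtain N where "x = \<alpha> ^ N" using gen by blast
      thus ?thesis using pw by simp
    qed
  qed
  hence "card (UNIV :: 'a set) \<le> card (W k)" by (intro card_mono) auto
  hence "q ^ m \<le> q ^ k" using W_card card_univ by (metis le_trans)
  thus ?thesis using q_gt1 by simp
qed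

lemma indep:
  assumes "k \<le> m" "\<forall>j<k. c j \<in> Fs" "(\<Sum>j<k. c j * \<alpha> ^ j) = 0"
  shows "\<forall>j<k. c j = 0"
  using assms
proof (induction k)
  case (Suc k)
  have ck: "c k = 0"
  proof (rule ccontr)
    assume nz: "c k \<noteq> 0"
    have "(\<Sum>j<k. c j * \<alpha> ^ j) + c k * \<alpha> ^ k = 0" using Suc.prems by simp
    hence "\<alpha> ^ k = (\<Sum>j<k. (- c j / c k) * \<alpha> ^ j)"
      using nz by (simp add: sum_divide_distrib[symmetric] sum_negf eq_neg_iff_add_eq_0 field_simps
          add.commute)
    moreover have "\<forall>j<k. - c j / c k \<in> Fs"
      using Suc.prems by (simp add: power_divide frob_neg[of _ 1, simplified])
    ultimately have "\<alpha> ^ k \<in> W k" using W_lin[of k "\<lambda>j. - c j / c k"] by simp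
    hence "k \<ge> m" by (rule W_all)
    thus False using Suc.prems by simp
  qed
  have "\<forall>j<k. c j = 0" using Suc.prems ck by (intro Suc.IH) auto
  thus ?case using ck less_Suc_eq by auto
qed simp

end


lemma card_via_bij:
  assumes "bij_betw d A B"
  shows "card {l\<in>A. P (d l)} = card {x\<in>B. P x}"
proof -
  have "{x\<in>B. P x} = d ` {l\<in>A. P (d l)}" using assms unfolding bij_betw_def by auto
  moreover have "inj_on d A" using assms by (simp add: bij_betw_def)
  hence "inj_on d {l\<in>A. P (d l)}" by (rule inj_on_subset) auto
  ultimately show ?thesis by (simp add: card_image)
qed

locale ffcode = ffield p e q r m \<alpha> for p e q r m and \<alpha> :: "'a::{finite,field}" +
  fixes d :: "nat \<Rightarrow> 'a" and Dset :: "'a set" and nD :: nat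
  assumes Dset_def: "Dset = {x::'a. trace q r (x ^ (q ^ r + 1)) = 0}"
    and nD_def: "nD = card Dset"
    and d_bij: "bij_betw d {..<nD} Dset"
begin

abbreviation GG where "GG \<equiv> G1' q m \<alpha> d"

definition cw :: "(nat \<Rightarrow> 'a) \<Rightarrow> nat \<Rightarrow> 'a" where
  "cw c = (\<lambda>l. if l < (nD + m + 1) then (\<Sum>j<m + 1. c j * GG j l) else 0)"

definition bb :: "(nat \<Rightarrow> 'a) \<Rightarrow> 'a" where
  "bb c = (\<Sum>j<m. c (Suc j) * \<alpha> ^ j)"

lemma m_ge: "m \<ge> 4" using m_def r_ge by simp

lemma gen_code_eq: "gen_code q (m + 1) (nD + m + 1) GG = {cw c | c. \<forall>j<m + 1. c j \<in> Fs}"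
  unfolding gen_code_def cw_def subfield_q_def by simp

lemma cw_low: "l < m + 1 \<Longrightarrow> cw c l = c l"
proof -
  assume l: "l < m + 1"
  have e: "\<And>j. c j * GG j l = (if j = l then c l else 0)" using l by (simp add: G1'_def)
  show ?thesis using l unfolding cw_def e by (simp add: sum.delta)
qed

lemma trace_sum: "trace q k (\<Sum>a\<in>A. f a :: 'a) = (\<Sum>a\<in>A. trace q k (f a))"
  unfolding trace_def frob_sum by (rule sum.swap)

lemma cw_high:
  assumes c: "\<forall>j<m + 1. c j \<in> Fs" and l: "l < nD"
  shows "cw c (m + 1 + l) = c 0 + c 2 + trace q m (bb c * d l)"
proof -
  have G: "GG j (m + 1 + l) = G1 q m \<alpha> d j l" for j by (simp add: G1'_def)
  have "cw c (m + 1 + l) = (\<Sum>j<m + 1. c j * GG j (m + 1 + l))" using l by (simp add: cw_def)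
  also have "\<dots> = (\<Sum>j<Suc m. c j * G1 q m \<alpha> d j l)" by (simp only: G Suc_eq_plus1)
  also have "\<dots> = c 0 * G1 q m \<alpha> d 0 l + (\<Sum>j<m. c (Suc j) * G1 q m \<alpha> d (Suc j) l)"
    by (rule sum.lessThan_Suc_shift)
  also have "(\<Sum>j<m. c (Suc j) * G1 q m \<alpha> d (Suc j) l) =
      (\<Sum>j<m. trace q m (c (Suc j) * \<alpha> ^ j * d l)) + (\<Sum>j<m. if j = 1 then c (Suc j) else 0)"
    unfolding sum.distrib[symmetric]
  proof (intro sum.cong refl)
    fix j assume j: "j \<in> {..<m}"
    have cF: "c (Suc j) ^ q = c (Suc j)" using c j by auto
    show "c (Suc j) * G1 q m \<alpha> d (Suc j) l = trace q m (c (Suc j) * \<alpha> ^ j * d l) + (if j = 1 then c (Suc j) else 0)"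
      using trace_scal[OF cF, of m "\<alpha> ^ j * d l"] by (simp add: G1_def distrib_left mult.assoc)
  qed
  also have "(\<Sum>j<m. if j = 1 then c (Suc j) else 0) = c 2" using m_ge by (simp add: sum.delta numeral_2_eq_2)
  also have "(\<Sum>j<m. trace q m (c (Suc j) * \<alpha> ^ j * d l)) = trace q m (bb c * d l)"
    unfolding bb_def trace_sum[symmetric] sum_distrib_right ..
  finally show ?thesis by (simp add: G1_def)
qed

lemma B0_eq: "q ^ (r - 1) * (q ^ r - q ^ (r - 1) - q + 1) = nD - q ^ (r - 1) * q ^ (r - 1)"
proof -
  define u where "u = q ^ (r - 1)"
  obtain k where rk: "r = Suc k" using r_ge by (cases r) auto
  have qr: "q ^ r = q * u" unfolding u_def rk by simp
  have uq: "u \<ge> q"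
  proof -
    have "q ^ 1 \<le> q ^ (r - 1)" using r_ge q_gt1 by (intro power_increasing) auto
    thus ?thesis unfolding u_def by simp
  qed
  have "q * u \<ge> u + q"
  proof -
    have "q * u = u + (q - 1) * u" using q_gt1 by (simp add: diff_mult_distrib)
    moreover have "1 \<le> q - 1" using q_gt by simp
    hence "1 * u \<le> (q - 1) * u" by (rule mult_le_mono1)
    ultimately show ?thesis using uq by linarith
  qed
  hence e: "q * u - q + 1 - u = q * u - u - q + 1" by arith
  have "nD - u * u = u * (q * u - q + 1) - u * u" using card_Dset unfolding nD_def Dset_def u_def[symmetric] qr by simp
  also have "\<dots> = u * (q * u - q + 1 - u)" by (simp add: diff_mult_distrib2)
  finally show ?thesis unfolding u_def[symmetric] qr e by simp
qed

lemma weight_bound: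
  assumes c: "\<forall>j<m + 1. c j \<in> Fs" and nz: "cw c \<noteq> (\<lambda>_. 0)"
  shows "hamming_weight (nD + m + 1) (cw c) \<ge> q ^ (r - 1) * (q ^ r - q ^ (r - 1) - q + 1) + 1"
proof -
  obtain j0 where j0: "j0 < m + 1" "c j0 \<noteq> 0"
  proof (rule ccontr)
    assume "\<not> thesis"
    hence "\<forall>j<m + 1. c j = 0" using that by blast
    hence "\<And>l. (\<Sum>j<m + 1. c j * GG j l) = 0" by (intro sum.neutral) auto
    hence "cw c = (\<lambda>_. 0)" unfolding cw_def by (intro ext) simp
    thus False using nz by simp
  qed
  define T where "T = {l. l < nD \<and> cw c (m + 1 + l) \<noteq> 0}"
  have sub: "insert j0 ((\<lambda>l. m + 1 + l) ` T) \<subseteq> {l. l < (nD + m + 1) \<and> cw c l \<noteq> 0}"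
    using j0 cw_low[of j0 c] unfolding T_def by auto
  have "card (insert j0 ((\<lambda>l. m + 1 + l) ` T)) = Suc (card T)"
    using j0 unfolding T_def by (subst card_insert_disjoint) (auto simp: card_image inj_on_def)
  hence wT: "hamming_weight (nD + m + 1) (cw c) \<ge> Suc (card T)"
    unfolding hamming_weight_def using card_mono[OF _ sub] by simp
  have "card T \<ge> nD - q ^ (r - 1) * q ^ (r - 1)"
  proof (cases "bb c = 0")
    case True
    have cs: "\<forall>j<m. c (Suc j) \<in> Fs" using c by auto
    have "(\<Sum>j<m. c (Suc j) * \<alpha> ^ j) = 0" using True unfolding bb_def .
    hence "\<forall>j<m. c (Suc j) = 0" by (rule indep[OF order_refl cs])
    note all = this
    have cz1: "j0 = 0"
    proof (rule ccontr)
      assume "j0 \<noteq> 0"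
      have "j0 - 1 < m" using j0 m_ge by arith
      hence "c (Suc (j0 - 1)) = 0" using all by blast
      moreover have "Suc (j0 - 1) = j0" using \<open>j0 \<noteq> 0\<close> by simp
      ultimately show False using j0 by simp
    qed
    have cz2: "c 2 = 0" using all[rule_format, of 1] m_ge by (simp add: numeral_2_eq_2)
    note cz = cz1 cz2
    have v: "cw c (m + 1 + l) = c 0" if l: "l < nD" for l
    proof -
      have "cw c (m + 1 + l) = c 0 + c 2 + trace q m (bb c * d l)" by (rule cw_high[OF c l])
      also have "\<dots> = c 0" using True cz2 trace_zero by simp
      finally show ?thesis .
    qed
    have "c 0 \<noteq> 0" using j0 cz1 by simp
    hence "T = {..<nD}" unfolding T_def using v by auto
    thus ?thesis by simp
  next
    case False
    define s where "s = - (c 0 + c 2)"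
    have "c 0 \<in> Fs" "c 2 \<in> Fs" using c m_ge by auto
    hence sF: "s \<in> Fs" unfolding s_def by (intro F_neg F_add)
    have key: "(c 0 + c 2 + x = 0) = (x = s)" for x
      unfolding s_def eq_neg_iff_add_eq_0 by (simp add: add.commute)
    have "(cw c (m + 1 + l) \<noteq> 0) = (trace q m (bb c * d l) \<noteq> s)" if l: "l < nD" for l
      unfolding cw_high[OF c l] key ..
    hence T: "T = {..<nD} - {l. l < nD \<and> trace q m (bb c * d l) = s}"
      unfolding T_def by auto
    have "{l. l < nD \<and> trace q m (bb c * d l) = s} = {l\<in>{..<nD}. trace q m (bb c * d l) = s}" by auto
    hence "card {l. l < nD \<and> trace q m (bb c * d l) = s} = card {x\<in>Dset. trace q m (bb c * x) = s}"
      using card_via_bij[OF d_bij] by simp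
    also have "\<dots> \<le> q ^ (r - 1) * q ^ (r - 1)"
      using count_bound[OF False sF] unfolding Dset_def .
    finally have cX: "card {l. l < nD \<and> trace q m (bb c * d l) = s} \<le> q ^ (r - 1) * q ^ (r - 1)" .
    have "card T = nD - card {l. l < nD \<and> trace q m (bb c * d l) = s}"
      unfolding T by (subst card_Diff_subset) auto
    thus ?thesis using cX by simp
  qed
  thus ?thesis using wT B0_eq by simp
qed

end


context ffcode
begin

definition unit_vec :: "nat \<Rightarrow> nat \<Rightarrow> 'a" where "unit_vec j = (\<lambda>i. if i = j then 1 else 0)"

lemma unit_F: "\<forall>i<m + 1. unit_vec j i \<in> Fs"
  unfolding unit_vec_def using F_0 F_1 by auto

lemma cw_in_C: "\<forall>j<m + 1. c j \<in> Fs \<Longrightarrow> cw c \<in> gen_code q (m + 1) (nD + m + 1) GG"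
  unfolding gen_code_eq by blast

lemma cw_unit: "j < m + 1 \<Longrightarrow> cw (unit_vec j) l = (if l < nD + m + 1 then GG j l else 0)"
proof -
  assume j: "j < m + 1"
  have e: "\<And>i. unit_vec j i * GG i l = (if i = j then GG j l else 0)" by (simp add: unit_vec_def)
  show ?thesis unfolding cw_def e using j by (simp add: sum.delta)
qed

lemma C_eq: "gen_code q (m + 1) (nD + m + 1) GG = cw ` PiE {..<m + 1} (\<lambda>_. Fs)"
proof (intro equalityI subsetI)
  fix v assume "v \<in> gen_code q (m + 1) (nD + m + 1) GG"
  then obtain c where c: "\<forall>j<m + 1. c j \<in> Fs" "v = cw c" unfolding gen_code_eq by auto
  have "cw c = cw (restrict c {..<m + 1})" unfolding cw_def by (intro ext) simp
  moreover have "restrict c {..<m + 1} \<in> PiE {..<m + 1} (\<lambda>_. Fs)" using c by auto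
  ultimately show "v \<in> cw ` PiE {..<m + 1} (\<lambda>_. Fs)" using c by blast
next
  fix v assume "v \<in> cw ` PiE {..<m + 1} (\<lambda>_. Fs)"
  then obtain c where "c \<in> PiE {..<m + 1} (\<lambda>_. Fs)" "v = cw c" by auto
  thus "v \<in> gen_code q (m + 1) (nD + m + 1) GG" using cw_in_C[of c] by auto
qed

lemma cw_inj: "inj_on cw (PiE {..<m + 1} (\<lambda>_. Fs))"
proof (rule inj_onI)
  fix c c' assume c: "c \<in> PiE {..<m + 1} (\<lambda>_. Fs)" and c': "c' \<in> PiE {..<m + 1} (\<lambda>_. Fs)"
    and eq: "cw c = cw c'"
  show "c = c'"
  proof (rule ext)
    fix x show "c x = c' x"
    proof (cases "x < m + 1")
      case True thus ?thesis using eq cw_low[of x c] cw_low[of x c'] by metis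
    next
      case False thus ?thesis using c c' by (simp add: PiE_def extensional_def)
    qed
  qed
qed

lemma dim_C: "has_dim q (gen_code q (m + 1) (nD + m + 1) GG) (m + 1)"
proof -
  have "card (gen_code q (m + 1) (nD + m + 1) GG) = card (PiE {..<m + 1} (\<lambda>_. Fs::'a set))"
    unfolding C_eq using cw_inj by (simp add: card_image)
  also have "\<dots> = q ^ (m + 1)" by (simp add: card_PiE card_F)
  finally have "card (gen_code q (m + 1) (nD + m + 1) GG) = q ^ (m + 1)" .
  moreover have "finite (gen_code q (m + 1) (nD + m + 1) GG)"
    unfolding C_eq by (intro finite_imageI finite_PiE) auto
  ultimately show ?thesis unfolding has_dim_def by simp
qed

lemma hw_le: "hamming_weight N v \<le> N"
proof -
  have "card {l. l < N \<and> v l \<noteq> 0} \<le> card {..<N}" by (intro card_mono) auto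
  thus ?thesis unfolding hamming_weight_def by simp
qed

lemma min_dist_C:
  "min_distance (nD + m + 1) (gen_code q (m + 1) (nD + m + 1) GG) \<ge> q ^ (r - 1) * (q ^ r - q ^ (r - 1) - q + 1) + 1"
proof -
  let ?C = "gen_code q (m + 1) (nD + m + 1) GG"
  let ?WS = "{hamming_weight (nD + m + 1) v | v. v \<in> ?C \<and> v \<noteq> (\<lambda>_. 0)}"
  have fin: "finite ?WS"
  proof (rule finite_subset)
    show "?WS \<subseteq> {..nD + m + 1}" using hw_le by auto
  qed simp
  have "cw (unit_vec 0) \<in> ?C" by (rule cw_in_C[OF unit_F])
  moreover have "cw (unit_vec 0) \<noteq> (\<lambda>_. 0)"
  proof
    assume "cw (unit_vec 0) = (\<lambda>_. 0)"
    hence "cw (unit_vec 0) 0 = 0" by simp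
    thus False using cw_low[of 0 "unit_vec 0"] by (simp add: unit_vec_def)
  qed
  ultimately have ne: "?WS \<noteq> {}" by blast
  have "\<forall>w\<in>?WS. w \<ge> q ^ (r - 1) * (q ^ r - q ^ (r - 1) - q + 1) + 1"
  proof
    fix w assume "w \<in> ?WS"
    then obtain v where v: "v \<in> ?C" "v \<noteq> (\<lambda>_. 0)" "w = hamming_weight (nD + m + 1) v" by auto
    then obtain c where c: "\<forall>j<m + 1. c j \<in> Fs" "v = cw c" unfolding gen_code_eq by auto
    show "w \<ge> q ^ (r - 1) * (q ^ r - q ^ (r - 1) - q + 1) + 1"
      using weight_bound[OF c(1)] v c by simp
  qed
  thus ?thesis unfolding min_distance_def using fin ne by (simp add: Min_ge_iff)
qed

end


context ffcode
begin

abbreviation CC where "CC \<equiv> gen_code q (m + 1) (nD + m + 1) GG"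

definition row :: "(nat \<Rightarrow> 'a) \<Rightarrow> nat \<Rightarrow> 'a" where
  "row v j = v j + (\<Sum>i<nD. v (m + 1 + i) * G1 q m \<alpha> d j i)"

lemma row_sum: "j < m + 1 \<Longrightarrow> (\<Sum>l<nD + m + 1. v l * GG j l) = row v j"
proof -
  assume j: "j < m + 1"
  have "(\<Sum>l<nD + m + 1. v l * GG j l) = (\<Sum>l<(m + 1) + nD. v l * GG j l)" by (simp add: ac_simps)
  also have "\<dots> = (\<Sum>l<m + 1. v l * GG j l) + (\<Sum>i<nD. v (m + 1 + i) * GG j (m + 1 + i))"
    by (rule sum_lessThan_add_split)
  also have "(\<Sum>l<m + 1. v l * GG j l) = v j"
  proof -
    have e: "\<And>l. l < m + 1 \<Longrightarrow> v l * GG j l = (if l = j then v j else 0)" by (simp add: G1'_def)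
    have "(\<Sum>l<m + 1. v l * GG j l) = (\<Sum>l<m + 1. if l = j then v j else 0)" by (rule sum.cong) (auto simp: e)
    thus ?thesis using j by (simp add: sum.delta)
  qed
  also have "(\<Sum>i<nD. v (m + 1 + i) * GG j (m + 1 + i)) = (\<Sum>i<nD. v (m + 1 + i) * G1 q m \<alpha> d j i)"
    by (simp add: G1'_def)
  finally show ?thesis unfolding row_def .
qed

lemma ortho_sum:
  "(\<Sum>l<nD + m + 1. v l * cw c l) = (\<Sum>j<m + 1. c j * row v j)"
proof -
  have "(\<Sum>l<nD + m + 1. v l * cw c l) = (\<Sum>l<nD + m + 1. \<Sum>j<m + 1. c j * (v l * GG j l))"
  proof (intro sum.cong refl)
    fix l assume "l \<in> {..<nD + m + 1}"
    hence "v l * cw c l = v l * (\<Sum>j<m + 1. c j * GG j l)" by (simp add: cw_def)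
    also have "\<dots> = (\<Sum>j<m + 1. v l * (c j * GG j l))" by (rule sum_distrib_left)
    also have "\<dots> = (\<Sum>j<m + 1. c j * (v l * GG j l))" by (intro sum.cong refl) (rule mult.left_commute)
    finally show "v l * cw c l = (\<Sum>j<m + 1. c j * (v l * GG j l))" .
  qed
  also have "\<dots> = (\<Sum>j<m + 1. \<Sum>l<nD + m + 1. c j * (v l * GG j l))" by (rule sum.swap)
  also have "\<dots> = (\<Sum>j<m + 1. c j * row v j)"
  proof (intro sum.cong refl)
    fix j assume j: "j \<in> {..<m + 1}"
    have "(\<Sum>l<nD + m + 1. c j * (v l * GG j l)) = c j * (\<Sum>l<nD + m + 1. v l * GG j l)"
      by (rule sum_distrib_left[symmetric])
    also have "(\<Sum>l<nD + m + 1. v l * GG j l) = row v j" using j by (intro row_sum) simp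
    finally show "(\<Sum>l<nD + m + 1. c j * (v l * GG j l)) = c j * row v j" .
  qed
  finally show ?thesis .
qed

lemma dual_iff:
  "v \<in> dual_code q (nD + m + 1) CC \<longleftrightarrow>
    (\<forall>l. nD + m + 1 \<le> l \<longrightarrow> v l = 0) \<and> (\<forall>l<nD + m + 1. v l \<in> Fs) \<and> (\<forall>j<m + 1. row v j = 0)"
proof -
  have "(\<forall>c\<in>CC. (\<Sum>l<nD + m + 1. v l * c l) = 0) \<longleftrightarrow> (\<forall>j<m + 1. row v j = 0)"
  proof
    assume H: "\<forall>c\<in>CC. (\<Sum>l<nD + m + 1. v l * c l) = 0"
    show "\<forall>j<m + 1. row v j = 0"
    proof (intro allI impI)
      fix j assume j: "j < m + 1"
      have "(\<Sum>l<nD + m + 1. v l * cw (unit_vec j) l) = 0" using H cw_in_C[OF unit_F] by blast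
      moreover have "(\<Sum>l<nD + m + 1. v l * cw (unit_vec j) l) = row v j"
      proof -
        have e: "\<And>i. unit_vec j i * row v i = (if i = j then row v j else 0)" by (simp add: unit_vec_def)
        show ?thesis unfolding ortho_sum e using j by (simp add: sum.delta)
      qed
      ultimately show "row v j = 0" by simp
    qed
  next
    assume H: "\<forall>j<m + 1. row v j = 0"
    show "\<forall>c\<in>CC. (\<Sum>l<nD + m + 1. v l * c l) = 0"
    proof
      fix c' assume "c' \<in> CC"
      then obtain c where c': "c' = cw c" unfolding gen_code_eq by auto
      have "(\<Sum>l<nD + m + 1. v l * c' l) = (\<Sum>j<m + 1. c j * row v j)" unfolding c' by (rule ortho_sum)
      also have "\<dots> = 0" using H by simp
      finally show "(\<Sum>l<nD + m + 1. v l * c' l) = 0" .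
    qed
  qed
  thus ?thesis unfolding dual_code_def subfield_q_def by blast
qed

lemma F_sum: "(\<forall>a\<in>A. f a \<in> Fs) \<Longrightarrow> sum f A \<in> Fs"
  using frob_sum[of f A 1] by simp

lemma G1_F: "G1 q m \<alpha> d j i \<in> Fs"
  unfolding G1_def using trace_m_F F_add[OF _ F_1] F_add[OF _ F_0] F_1 by auto

definition psi :: "(nat \<Rightarrow> 'a) \<Rightarrow> nat \<Rightarrow> 'a" where
  "psi v = restrict (\<lambda>i. v (m + 1 + i)) {..<nD}"

definition phi :: "(nat \<Rightarrow> 'a) \<Rightarrow> nat \<Rightarrow> 'a" where
  "phi w = (\<lambda>l. if l < m + 1 then - (\<Sum>i<nD. w i * G1 q m \<alpha> d l i)
               else if l < nD + m + 1 then w (l - (m + 1)) else 0)"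

lemma dim_dual: "has_dim q (dual_code q (nD + m + 1) CC) nD"
proof -
  let ?Cd = "dual_code q (nD + m + 1) CC"
  let ?P = "PiE {..<nD} (\<lambda>_. Fs::'a set)"
  have h1: "\<forall>v\<in>?Cd. phi (psi v) = v"
    proof
      fix v assume v: "v \<in> ?Cd"
      hence v1: "\<forall>l. nD + m + 1 \<le> l \<longrightarrow> v l = 0" and v3: "\<forall>j<m + 1. row v j = 0"
        unfolding dual_iff by auto
      show "phi (psi v) = v"
      proof (rule ext)
        fix l
        show "phi (psi v) l = v l"
        proof (cases "l < m + 1")
          case True
          have "(\<Sum>i<nD. psi v i * G1 q m \<alpha> d l i) = (\<Sum>i<nD. v (m + 1 + i) * G1 q m \<alpha> d l i)"
            by (intro sum.cong refl) (simp add: psi_def)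
          moreover have "v l + (\<Sum>i<nD. v (m + 1 + i) * G1 q m \<alpha> d l i) = 0"
            using v3 True unfolding row_def by simp
          hence "v l = - (\<Sum>i<nD. v (m + 1 + i) * G1 q m \<alpha> d l i)" by (simp only: eq_neg_iff_add_eq_0)
          ultimately show ?thesis using True by (simp add: phi_def)
        next
          case False
          thus ?thesis using v1 by (auto simp: phi_def psi_def)
        qed
      qed
    qed
    have h2: "\<forall>w\<in>?P. psi (phi w) = w"
    proof
      fix w assume w: "w \<in> ?P"
      show "psi (phi w) = w"
      proof (rule ext)
        fix i show "psi (phi w) i = w i"
          using w by (cases "i < nD") (auto simp: psi_def phi_def PiE_def extensional_def)
      qed
    qed
    have h3: "psi ` ?Cd \<subseteq> ?P"
    proof
      fix w assume "w \<in> psi ` ?Cd"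
      then obtain v where v: "v \<in> ?Cd" "w = psi v" by auto
      hence "\<forall>l<nD + m + 1. v l \<in> Fs" unfolding dual_iff by auto
      thus "w \<in> ?P" using v by (auto simp: psi_def)
    qed
    have h4: "phi ` ?P \<subseteq> ?Cd"
    proof
      fix v assume "v \<in> phi ` ?P"
      then obtain w where w: "w \<in> ?P" "v = phi w" by auto
      have "\<forall>l. nD + m + 1 \<le> l \<longrightarrow> v l = 0" using w by (auto simp: phi_def)
      moreover have "\<forall>l<nD + m + 1. v l \<in> Fs"
      proof (intro allI impI)
        fix l assume l: "l < nD + m + 1"
        show "v l \<in> Fs"
        proof (cases "l < m + 1")
          case True
          have "\<forall>i\<in>{..<nD}. w i \<in> Fs" using w(1) by (simp add: PiE_iff)
          hence "(\<Sum>i<nD. w i * G1 q m \<alpha> d l i) \<in> Fs"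
            by (intro F_sum ballI F_mult G1_F) auto
          hence "- (\<Sum>i<nD. w i * G1 q m \<alpha> d l i) \<in> Fs" by (rule F_neg)
          moreover have "v l = - (\<Sum>i<nD. w i * G1 q m \<alpha> d l i)" using True by (simp add: w(2) phi_def)
          ultimately show ?thesis by simp
        next
          case False
          have lt: "l - (m + 1) < nD" using l False by arith
          have "w (l - (m + 1)) \<in> Fs" using w(1) lt by (simp add: PiE_iff)
          moreover have "v l = w (l - (m + 1))" using False l by (simp add: w(2) phi_def)
          ultimately show ?thesis by simp
        qed
      qed
      moreover have "\<forall>j<m + 1. row v j = 0"
      proof (intro allI impI)
        fix j assume j: "j < m + 1"
        have "(\<Sum>i<nD. v (m + 1 + i) * G1 q m \<alpha> d j i) = (\<Sum>i<nD. w i * G1 q m \<alpha> d j i)"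
          by (intro sum.cong refl) (simp add: w(2) phi_def)
        moreover have "v j = - (\<Sum>i<nD. w i * G1 q m \<alpha> d j i)" using j by (simp add: w(2) phi_def)
        ultimately show "row v j = 0" unfolding row_def by simp
      qed
      ultimately show "v \<in> ?Cd" unfolding dual_iff by blast
    qed
  have bij: "bij_betw psi ?Cd ?P" by (rule bij_betw_byWitness[OF h1 h2 h3 h4])
  have "card ?Cd = card ?P" using bij by (rule bij_betw_same_card)
  also have "\<dots> = q ^ nD" by (simp add: card_PiE card_F)
  finally have "card ?Cd = q ^ nD" .
  moreover have "finite ?Cd"
  proof (rule finite_subset)
    show "?Cd \<subseteq> phi ` ?P"
    proof
      fix v assume v: "v \<in> ?Cd"
      have "v = phi (psi v)" using h1 v by simp
      moreover have "psi v \<in> ?P" using h3 v by blast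
      ultimately show "v \<in> phi ` ?P" by (rule image_eqI)
    qed
    show "finite (phi ` ?P)" by (intro finite_imageI finite_PiE) auto
  qed
  ultimately show ?thesis unfolding has_dim_def by simp
qed

end


context ffcode
begin

abbreviation CD where "CD \<equiv> dual_code q (nD + m + 1) CC"

lemma dual_weight_ge2:
  assumes v: "v \<in> CD" "v \<noteq> (\<lambda>_. 0)"
  shows "hamming_weight (nD + m + 1) v \<ge> 2"
proof (rule ccontr)
  assume "\<not> ?thesis"
  hence c1: "card {l. l < nD + m + 1 \<and> v l \<noteq> 0} \<le> 1" unfolding hamming_weight_def by simp
  have v1: "\<forall>l. nD + m + 1 \<le> l \<longrightarrow> v l = 0" and v3: "\<forall>j<m + 1. row v j = 0"
    using v(1) unfolding dual_iff by auto
  obtain l0 where l0: "v l0 \<noteq> 0" using v(2) by auto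
  have l0N: "l0 < nD + m + 1" using v1 l0 by (meson not_le)
  have z: "v l = 0" if "l < nD + m + 1" "l \<noteq> l0" for l
  proof (rule ccontr)
    assume "v l \<noteq> 0"
    hence "{l, l0} \<subseteq> {l. l < nD + m + 1 \<and> v l \<noteq> 0}" using that l0 l0N by auto
    hence "card {l, l0} \<le> card {l. l < nD + m + 1 \<and> v l \<noteq> 0}" by (intro card_mono) auto
    thus False using c1 that by simp
  qed
  show False
  proof (cases "l0 < m + 1")
    case True
    have "(\<Sum>i<nD. v (m + 1 + i) * G1 q m \<alpha> d l0 i) = 0"
      using True by (intro sum.neutral) (auto intro!: z)
    hence "row v l0 = v l0" unfolding row_def by simp
    thus False using v3 True l0 by simp
  next
    case False
    define i0 where "i0 = l0 - (m + 1)"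
    have i0: "i0 < nD" "m + 1 + i0 = l0" using False l0N unfolding i0_def by arith+
    have "\<And>i. i < nD \<Longrightarrow> v (m + 1 + i) * G1 q m \<alpha> d 0 i = (if i = i0 then v l0 else 0)"
      using i0 z by (auto simp: G1_def)
    hence "(\<Sum>i<nD. v (m + 1 + i) * G1 q m \<alpha> d 0 i) = (\<Sum>i<nD. if i = i0 then v l0 else 0)"
      by (intro sum.cong refl) auto
    also have "\<dots> = v l0" using i0 by (simp add: sum.delta)
    finally have "row v 0 = v 0 + v l0" unfolding row_def by simp
    moreover have "v 0 = 0" using z[of 0] False by simp
    ultimately show False using v3 l0 by simp
  qed
qed

lemma dual_min:
  "2 \<le> min_distance (nD + m + 1) CD \<and> min_distance (nD + m + 1) CD \<le> 3"
proof -
  let ?WD = "{hamming_weight (nD + m + 1) v | v. v \<in> CD \<and> v \<noteq> (\<lambda>_. 0)}"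
  have fin: "finite ?WD"
  proof (rule finite_subset)
    show "?WD \<subseteq> {..nD + m + 1}" using hw_le by auto
  qed simp
  have "0 \<in> Dset" unfolding Dset_def using q_gt1 by (simp add: trace_zero)
  then obtain l0 where l0: "l0 < nD" "d l0 = 0" using d_bij unfolding bij_betw_def by force
  define v3 where "v3 = (\<lambda>l. if l = 0 then 1 else if l = 2 then 1 else if l = m + 1 + l0 then - 1 else (0::'a))"
  have m4: "m \<ge> 4" by (rule m_ge)
  have v3in: "v3 \<in> CD"
    unfolding dual_iff
  proof (intro conjI allI impI)
    fix l assume "nD + m + 1 \<le> l"
    thus "v3 l = 0" using l0 m4 by (simp add: v3_def)
  next
    fix l assume "l < nD + m + 1"
    show "v3 l \<in> Fs" unfolding v3_def using F_0 F_1 F_neg[OF F_1] by auto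
  next
    fix j assume j: "j < m + 1"
    have "\<And>i. v3 (m + 1 + i) * G1 q m \<alpha> d j i = (if i = l0 then - G1 q m \<alpha> d j l0 else 0)"
      using m4 by (simp add: v3_def)
    hence "(\<Sum>i<nD. v3 (m + 1 + i) * G1 q m \<alpha> d j i) = (\<Sum>i<nD. if i = l0 then - G1 q m \<alpha> d j l0 else 0)"
      by simp
    also have "\<dots> = - G1 q m \<alpha> d j l0" using l0 by (simp add: sum.delta)
    also have "G1 q m \<alpha> d j l0 = (if j = 0 then 1 else if j = 2 then 1 else 0)"
      using l0 by (simp add: G1_def trace_zero)
    also have "v3 j = (if j = 0 then 1 else if j = 2 then 1 else 0)" using j by (simp add: v3_def)
    ultimately show "row v3 j = 0" unfolding row_def by simp
  qed
  have v3nz: "v3 \<noteq> (\<lambda>_. 0)"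
  proof
    assume "v3 = (\<lambda>_. 0)" hence "v3 0 = 0" by simp
    thus False by (simp add: v3_def)
  qed
  have "{l. l < nD + m + 1 \<and> v3 l \<noteq> 0} = {0, 2, m + 1 + l0}"
    using m4 l0 by (auto simp: v3_def)
  hence w3: "hamming_weight (nD + m + 1) v3 = 3" unfolding hamming_weight_def using m4 by simp
  have "3 \<in> ?WD" using v3in v3nz w3 by force
  hence le3: "min_distance (nD + m + 1) CD \<le> 3" unfolding min_distance_def using fin by (rule Min_le[rotated])
  have ne: "?WD \<noteq> {}" using \<open>3 \<in> ?WD\<close> by blast
  have "\<forall>w\<in>?WD. w \<ge> 2" using dual_weight_ge2 by auto
  hence "min_distance (nD + m + 1) CD \<ge> 2" unfolding min_distance_def using fin ne by (simp add: Min_ge_iff)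
  thus ?thesis using le3 by simp
qed

end

theorem theorem3p11:
  fixes p e q r m :: nat and \<alpha> :: "'a::{finite,field}" and D :: "'a set" and d :: "nat \<Rightarrow> 'a"
  assumes "prime p" and "q = p ^ e" and "q > 2"
    and "r \<ge> 2" and "m = 2 * r"
    and "card (UNIV :: 'a set) = q ^ m"
    and "D = {x. trace q r (x ^ (q ^ r + 1)) = 0}"
    and "bij_betw d {..<card D} D"
    and "\<forall>x::'a. x \<noteq> 0 \<longrightarrow> (\<exists>k. x = \<alpha> ^ k)"
  shows "card D = q ^ (r - 1) * (q ^ r - q + 1)
    \<and> (let n = card D; N = n + m + 1;
           C = gen_code q (m + 1) N (G1' q m \<alpha> d);
           Cd = dual_code q N C
       in has_dim q C (m + 1)
          \<and> min_distance N C \<ge> q ^ (r - 1) * (q ^ r - q ^ (r - 1) - q + 1) + 1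
          \<and> has_dim q Cd n
          \<and> 2 \<le> min_distance N Cd \<and> min_distance N Cd \<le> 3)"
proof -
  interpret ffcode p e q r m \<alpha> d D "card D"
    by unfold_locales (use assms in auto)
  have "card D = q ^ (r - 1) * (q ^ r - q + 1)" using card_Dset assms(7) by simp
  moreover have "has_dim q CC (m + 1)" by (rule dim_C)
  moreover have "min_distance (card D + m + 1) CC \<ge> q ^ (r - 1) * (q ^ r - q ^ (r - 1) - q + 1) + 1"
    by (rule min_dist_C)
  moreover have "has_dim q CD (card D)" by (rule dim_dual)
  moreover note dual_min
  ultimately show ?thesis unfolding Let_def by simp
qed



end
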